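(* Suppose the following statement (A) holds: for every $m\ge 1$ and all non-overlapping permutations $\pi,\tau\in\mathfrak{S}_m$ that are in standard form, if $\pi$ and $\tau$ are c-Wilf equivalent then $\pi_1=\tau_1$ and $\pi_m=\tau_m$. Then the following statement (B) holds: for every $m\ge 1$ and all permutations $\pi,\tau\in\mathfrak{S}_m$ in standard form, if $\pi$ and $\tau$ are strongly c-Wilf equivalent then $\pi_1=\tau_1$ and $\pi_m=\tau_m$.
   Context: $\mathfrak{S}_n$ is the symmetric group on $[n]$, permutations written $\sigma=\sigma_1\cdots\sigma_n$, and $\mathfrak{S}=\bigcup_{n\ge0}\mathfrak{S}_n$. The standardization $\operatorname{st}(w)$ of a word of distinct integers replaces its smallest entry by 1, the next smallest by 2, etc. For $\pi\in\mathfrak{S}_m$ and $\sigma\in\mathfrak{S}_n$, $\operatorname{Em}(\pi,\sigma)=\{i\in[n-m+1]:\operatorname{st}(\sigma_i\cdots\sigma_{i+m-1})=\pi\}$ and $\operatorname{em}(\pi,\sigma)=|\operatorname{Em}(\pi,\sigma)|$. Let $a^\pi_{n,k}$ be the number of $\sigma\in\mathfrak{S}_n$ with $\operatorname{em}(\pi,\sigma)=k$. Two permutations $\pi,\tau$ are c-Wilf equivalent if $a^\pi_{n,0}=a^\tau_{n,0}$ for all $n$, and strongly c-Wilf equivalent if $a^\pi_{n,k}=a^\tau_{n,k}$ for all $n,k$. The overlap set of $\pi\in\mathfrak{S}_m$ is $\mathcal{O}_\pi=\{i\in[m-1]:\operatorname{st}(\pi_{i+1}\cdots\pi_m)=\operatorname{st}(\pi_1\cdots\pi_{m-i})\}$;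 $\pi$ is non-overlapping if $\mathcal{O}_\pi=\{m-1\}$. A permutation $\pi\in\mathfrak{S}_m$ is in standard form if $\pi_1<\pi_m$ and $\pi_1+\pi_m\le m+1$. *)

theory Defs
  imports "HOL-Combinatorics.Multiset_Permutations"
begin

text \<open>Permutations in one-line notation are lists of naturals; the symmetric
group S_n is the set of lists that are arrangements of 1..n.\<close>

definition Sym :: "nat \<Rightarrow> nat list set" where
  "Sym n = permutations_of_set {1..n}"

definition st :: "nat list \<Rightarrow> nat list" where
  "st w = map (\<lambda>x. card {y \<in> set w. y \<le> x}) w"

text \<open>Consecutive factor of length m starting at (1-based) position i.\<close>
definition factor :: "nat list \<Rightarrow> nat \<Rightarrow> nat \<Rightarrow> nat list" where
  "factor \<sigma> i m = take m (drop (i - 1) \<sigma>)"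

definition Em :: "nat list \<Rightarrow> nat list \<Rightarrow> nat set" where
  "Em \<pi> \<sigma> = {i. 1 \<le> i \<and> i + length \<pi> \<le> length \<sigma> + 1 \<and>
                   st (factor \<sigma> i (length \<pi>)) = \<pi>}"

definition em :: "nat list \<Rightarrow> nat list \<Rightarrow> nat" where
  "em \<pi> \<sigma> = card (Em \<pi> \<sigma>)"

definition a_count :: "nat list \<Rightarrow> nat \<Rightarrow> nat \<Rightarrow> nat" where
  "a_count \<pi> n k = card {\<sigma> \<in> Sym n. em \<pi> \<sigma> = k}"

definition c_wilf_equiv :: "nat list \<Rightarrow> nat list \<Rightarrow> bool" where
  "c_wilf_equiv \<pi> \<tau> \<longleftrightarrow> (\<forall>n. a_count \<pi> n 0 = a_count \<tau> n 0)"

definition strongly_c_wilf_equiv :: "nat list \<Rightarrow> nat list \<Rightarrow> bool" where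
  "strongly_c_wilf_equiv \<pi> \<tau> \<longleftrightarrow> (\<forall>n k. a_count \<pi> n k = a_count \<tau> n k)"

definition overlap_set :: "nat list \<Rightarrow> nat set" where
  "overlap_set \<pi> = {i. 1 \<le> i \<and> i \<le> length \<pi> - 1 \<and>
                        st (drop i \<pi>) = st (take (length \<pi> - i) \<pi>)}"

definition non_overlapping :: "nat list \<Rightarrow> bool" where
  "non_overlapping \<pi> \<longleftrightarrow> overlap_set \<pi> = {length \<pi> - 1}"

text \<open>Standard form: pi_1 < pi_m and pi_1 + pi_m <= m + 1 (1-based, so pi_1 = \<pi>!0, pi_m = last).\<close>
definition standard_form :: "nat list \<Rightarrow> bool" where
  "standard_form \<pi> \<longleftrightarrow> \<pi> ! 0 < \<pi> ! (length \<pi> - 1) \<and>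
                         \<pi> ! 0 + \<pi> ! (length \<pi> - 1) \<le> length \<pi> + 1"

end

theory Submission
  imports Defs
begin

definition rk :: "nat set \<Rightarrow> nat \<Rightarrow> nat" where "rk V x = card {v\<in>V. v < x}"

lemma rk_less: "finite V \<Longrightarrow> x \<in> V \<Longrightarrow> x < y \<Longrightarrow> rk V x < rk V y"
  unfolding rk_def by (rule psubset_card_mono) auto

lemma rk_le: "finite V \<Longrightarrow> x \<le> y \<Longrightarrow> rk V x \<le> rk V y"
  unfolding rk_def by (rule card_mono) auto

lemma rk_bound: "finite V \<Longrightarrow> x \<in> V \<Longrightarrow> rk V x < card V"
  unfolding rk_def by (rule psubset_card_mono) auto

lemma rk_inj: "finite V \<Longrightarrow> inj_on (rk V) V"
  by (metis inj_onI linorder_neqE_nat nat_less_le rk_less)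

lemma rk_less_iff: "finite V \<Longrightarrow> x \<in> V \<Longrightarrow> y \<in> V \<Longrightarrow> (rk V x < rk V y) = (x < y)"
  by (metis linorder_neqE_nat nat_less_le not_less_iff_gr_or_eq rk_less)

lemma rk_image: "finite V \<Longrightarrow> rk V ` V = {..<card V}"
proof -
  assume f: "finite V"
  have "rk V ` V \<subseteq> {..<card V}" using rk_bound[OF f] by auto
  moreover have "card (rk V ` V) = card {..<card V}"
    using card_image[OF rk_inj[OF f]] by simp
  ultimately show ?thesis by (simp add: card_subset_eq)
qed

lemma rk_bij: "finite V \<Longrightarrow> bij_betw (rk V) V {..<card V}"
  by (simp add: bij_betw_def rk_inj rk_image)

definition sel :: "nat set \<Rightarrow> nat \<Rightarrow> nat" where "sel V i = the_inv_into V (rk V) i"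

lemma sel_rk: "finite V \<Longrightarrow> x \<in> V \<Longrightarrow> sel V (rk V x) = x"
  unfolding sel_def by (simp add: rk_inj the_inv_into_f_f)

lemma sel_in: "finite V \<Longrightarrow> i < card V \<Longrightarrow> sel V i \<in> V"
  unfolding sel_def by (metis lessThan_iff rk_image rk_inj the_inv_into_into subset_refl)

lemma rk_sel: "finite V \<Longrightarrow> i < card V \<Longrightarrow> rk V (sel V i) = i"
  unfolding sel_def by (metis f_the_inv_into_f lessThan_iff rk_image rk_inj)

lemma sel_mono: "finite V \<Longrightarrow> i < j \<Longrightarrow> j < card V \<Longrightarrow> sel V i < sel V j"
  by (metis less_trans not_less rk_le rk_sel)

lemma sel_image: "finite V \<Longrightarrow> sel V ` {..<card V} = V"
proof -
  assume f: "finite V"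
  have "sel V ` {..<card V} \<subseteq> V" using sel_in[OF f] by auto
  moreover have "V \<subseteq> sel V ` {..<card V}"
  proof
    fix x assume "x \<in> V"
    then have "x = sel V (rk V x)" "rk V x < card V" using sel_rk[OF f] rk_bound[OF f] by auto
    then show "x \<in> sel V ` {..<card V}" by blast
  qed
  ultimately show ?thesis by blast
qed

lemma length_st[simp]: "length (st w) = length w" by (simp add: st_def)

lemma st_eq: "st w = map (\<lambda>x. Suc (rk (set w) x)) w"
proof -
  have "card {y \<in> set w. y \<le> x} = Suc (rk (set w) x)" if "x \<in> set w" for x
  proof -
    have "{y \<in> set w. y \<le> x} = insert x {y \<in> set w. y < x}" using that by auto
    then show ?thesis by (simp add: rk_def)
  qed
  then show ?thesis unfolding st_def by (intro map_cong) auto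
qed

lemma st_nth: "j < length w \<Longrightarrow> st w ! j = Suc (rk (set w) (w ! j))"
  by (simp add: st_eq)

lemma st_map_mono:
  assumes "\<And>x y. x \<in> set w \<Longrightarrow> y \<in> set w \<Longrightarrow> x < y \<Longrightarrow> f x < f y"
  shows "st (map f w) = st w"
proof -
  have inj: "inj_on f (set w)"
    by (metis assms inj_onI linorder_neqE_nat nat_less_le)
  have "rk (f ` set w) (f x) = rk (set w) x" if "x \<in> set w" for x
  proof -
    have "{v \<in> f ` set w. v < f x} = f ` {v \<in> set w. v < x}"
    proof
      show "{v \<in> f ` set w. v < f x} \<subseteq> f ` {v \<in> set w. v < x}"
      proof
        fix v assume "v \<in> {v \<in> f ` set w. v < f x}"
        then obtain y where y: "y \<in> set w" "v = f y" "f y < f x" by auto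
        have "y < x"
        proof (rule ccontr)
          assume "\<not> y < x"
          then have "y = x \<or> x < y" by auto
          then show False using assms[OF that y(1)] y(3) by auto
        qed
        then show "v \<in> f ` {v \<in> set w. v < x}" using y by auto
      qed
      show "f ` {v \<in> set w. v < x} \<subseteq> {v \<in> f ` set w. v < f x}"
        using assms that by auto
    qed
    then show ?thesis unfolding rk_def
      by (metis (no_types, lifting) card_image inj inj_on_subset mem_Collect_eq subsetI)
  qed
  then show ?thesis by (simp add: st_eq)
qed

lemma st_rank_mono: "x \<in> set w \<Longrightarrow> y \<in> set w \<Longrightarrow> x < y \<Longrightarrow>
   Suc (rk (set w) x) < Suc (rk (set w) y)"
  by (simp add: rk_less)

lemma st_st: "st (st w) = st w"
proof -
  have e: "st w = map (\<lambda>x. Suc (rk (set w) x)) w" by (rule st_eq)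
  have "st (map (\<lambda>x. Suc (rk (set w) x)) w) = st w"
    by (rule st_map_mono) (simp add: rk_less)
  then show ?thesis by (metis e)
qed

lemma st_sub_take_drop: "st (take k (drop i (st w))) = st (take k (drop i w))"
proof -
  have "st (take k (drop i (st w))) = st (map (\<lambda>x. Suc (rk (set w) x)) (take k (drop i w)))"
    by (simp add: st_eq take_map drop_map)
  also have "\<dots> = st (take k (drop i w))"
    by (rule st_map_mono) (meson in_set_dropD in_set_takeD rk_less finite_set Suc_mono)
  finally show ?thesis .
qed

lemma st_sub_drop: "st (drop i (st w)) = st (drop i w)"
  using st_sub_take_drop[of "length w" i w] by simp

lemma st_sub_take: "st (take k (st w)) = st (take k w)"
  using st_sub_take_drop[of k 0 w] by simp

lemma Sym_iff: "p \<in> Sym n \<longleftrightarrow> set p = {1..n} \<and> distinct p"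
  by (simp add: Sym_def permutations_of_set_def)

lemma Sym_length: "p \<in> Sym n \<Longrightarrow> length p = n"
  by (metis Sym_iff card_atLeastAtMost diff_Suc_1 distinct_card)

lemma finite_Sym: "finite (Sym n)"
  by (simp add: Sym_def)

lemma st_Sym: "distinct w \<Longrightarrow> st w \<in> Sym (length w)"
proof -
  assume d: "distinct w"
  have "set (st w) = (\<lambda>x. Suc (rk (set w) x)) ` set w" by (simp add: st_eq)
  also have "\<dots> = Suc ` (rk (set w) ` set w)" by auto
  also have "\<dots> = Suc ` {..<length w}" using rk_image[of "set w"] d by (simp add: distinct_card)
  also have "\<dots> = {1..length w}" by (simp add: image_Suc_lessThan)
  finally have s: "set (st w) = {1..length w}" .
  have "distinct (st w)"
    unfolding st_eq distinct_map using d rk_inj[of "set w"] by (simp add: inj_on_def)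
  then show ?thesis using s by (simp add: Sym_iff)
qed

lemma rk_Sym: "p \<in> Sym n \<Longrightarrow> x \<in> set p \<Longrightarrow> rk (set p) x = x - 1"
proof -
  assume p: "p \<in> Sym n" and x: "x \<in> set p"
  then have "set p = {1..n}" by (simp add: Sym_iff)
  then have "{v \<in> set p. v < x} = {1..<x}" using x by auto
  then show ?thesis by (simp add: rk_def)
qed

lemma st_id: "p \<in> Sym n \<Longrightarrow> st p = p"
proof -
  assume p: "p \<in> Sym n"
  have "Suc (rk (set p) x) = x" if "x \<in> set p" for x
  proof -
    have "x \<ge> 1" using p that by (auto simp: Sym_iff)
    then show ?thesis using rk_Sym[OF p that] by simp
  qed
  then show ?thesis unfolding st_eq by (intro map_idI) auto
qed

lemma st_less_iff: "distinct w \<Longrightarrow> j < length w \<Longrightarrow> k < length w \<Longrightarrow>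
   (st w ! j < st w ! k) = (w ! j < w ! k)"
  by (simp add: st_nth rk_less_iff)

lemma st_eq_less: "distinct u \<Longrightarrow> distinct v \<Longrightarrow> st u = st v \<Longrightarrow> j < length u \<Longrightarrow> k < length u \<Longrightarrow>
   (u ! j < u ! k) = (v ! j < v ! k)"
  by (metis length_st st_less_iff)

definition inst :: "nat set \<Rightarrow> nat list \<Rightarrow> nat list" where
  "inst V p = map (\<lambda>i. sel V (i - 1)) p"

lemma length_inst[simp]: "length (inst V p) = length p" by (simp add: inst_def)

lemma inst_props:
  assumes f: "finite V" and p: "p \<in> Sym (card V)"
  shows "set (inst V p) = V" "distinct (inst V p)" "st (inst V p) = p"
proof -
  have sp: "set p = {1..card V}" "distinct p" using p by (auto simp: Sym_iff)
  have "(\<lambda>i. sel V (i - 1)) ` {1..card V} = sel V ` {..<card V}"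
  proof -
    have "{1..card V} = Suc ` {..<card V}" by (simp add: image_Suc_lessThan)
    then show ?thesis by (simp add: image_image)
  qed
  then show "set (inst V p) = V" using sp sel_image[OF f] by (simp add: inst_def)
  have mono: "sel V (x - 1) < sel V (y - 1)" if "x \<in> set p" "y \<in> set p" "x < y" for x y
    using that sp by (intro sel_mono[OF f]) auto
  then have "inj_on (\<lambda>i. sel V (i - 1)) (set p)"
    by (metis (no_types, lifting) inj_onI linorder_neqE_nat nat_less_le)
  then show "distinct (inst V p)" using sp by (simp add: inst_def distinct_map)
  show "st (inst V p) = p" unfolding inst_def using st_map_mono[OF mono] st_id[OF p] by simp
qed

lemma inst_unique:
  assumes d: "distinct w" and s: "set w = V"
  shows "inst V (st w) = w"
proof -
  have f: "finite V" using s by auto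
  show ?thesis unfolding inst_def st_eq map_map o_def using s f
    by (intro map_idI) (simp add: sel_rk)
qed

definition occ :: "nat list \<Rightarrow> nat list \<Rightarrow> nat \<Rightarrow> bool" where
  "occ p \<sigma> x \<longleftrightarrow> x + length p \<le> length \<sigma> \<and> st (take (length p) (drop x \<sigma>)) = p"

definition OC :: "nat list \<Rightarrow> nat list \<Rightarrow> nat set" where "OC p \<sigma> = {x. occ p \<sigma> x}"

lemma Em_OC: "Em p \<sigma> = Suc ` OC p \<sigma>"
proof
  show "Em p \<sigma> \<subseteq> Suc ` OC p \<sigma>"
  proof
    fix i assume i: "i \<in> Em p \<sigma>"
    then have i1: "1 \<le> i" and i2: "i + length p \<le> length \<sigma> + 1"
      and i3: "st (take (length p) (drop (i - 1) \<sigma>)) = p"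
      by (auto simp: Em_def factor_def)
    have "occ p \<sigma> (i - 1)" unfolding occ_def using i1 i2 i3 by simp
    moreover have "i = Suc (i - 1)" using i1 by simp
    ultimately show "i \<in> Suc ` OC p \<sigma>" unfolding OC_def by blast
  qed
  show "Suc ` OC p \<sigma> \<subseteq> Em p \<sigma>"
  proof
    fix i assume "i \<in> Suc ` OC p \<sigma>"
    then obtain x where x: "i = Suc x" "occ p \<sigma> x" by (auto simp: OC_def)
    then show "i \<in> Em p \<sigma>" by (auto simp: Em_def factor_def occ_def)
  qed
qed

lemma em_OC: "em p \<sigma> = card (OC p \<sigma>)"
  by (simp add: em_def Em_OC card_image)

lemma OC_sub: "p \<noteq> [] \<Longrightarrow> OC p \<sigma> \<subseteq> {..<length \<sigma>}"
  by (cases p) (auto simp: OC_def occ_def)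

lemma finite_OC: "p \<noteq> [] \<Longrightarrow> finite (OC p \<sigma>)"
  using OC_sub finite_subset by blast

lemma occ_st: "occ p (st w) x = occ p w x"
  by (simp add: occ_def st_sub_take_drop)

lemma occ_map_mono:
  assumes "\<And>x y. x \<in> set w \<Longrightarrow> y \<in> set w \<Longrightarrow> x < y \<Longrightarrow> f x < f y"
  shows "occ p (map f w) x = occ p w x"
proof -
  have "st (take (length p) (drop x (map f w))) = st (take (length p) (drop x w))"
    unfolding drop_map take_map
    by (rule st_map_mono) (meson assms in_set_dropD in_set_takeD)
  then show ?thesis by (simp add: occ_def)
qed

lemma occ_append1: "x + length p \<le> length u \<Longrightarrow> occ p (u @ v) x = occ p u x"
  by (simp add: occ_def)

lemma occ_append2: "occ p (u @ v) (length u + x) = occ p v x"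
  by (simp add: occ_def)

lemma occ_take: "x + length p \<le> l \<Longrightarrow> l \<le> length \<sigma> \<Longrightarrow> occ p (take l \<sigma>) x = occ p \<sigma> x"
  by (simp add: occ_def take_drop min_def)

lemma occ_drop: "l \<le> length \<sigma> \<Longrightarrow> occ p (drop l \<sigma>) x = occ p \<sigma> (l + x)"
  by (auto simp: occ_def add.commute add.left_commute)

lemma inst_map: "inst V c = map (\<lambda>i. sel V (i - 1)) c" by (simp add: inst_def)

lemma occ_inst:
  assumes "finite V" "c \<in> Sym (card V)"
  shows "occ p (inst V c) x = occ p c x"
  unfolding inst_map
proof (rule occ_map_mono)
  fix a b assume "a \<in> set c" "b \<in> set c" "a < b"
  then show "sel V (a - 1) < sel V (b - 1)" using assms
    by (intro sel_mono) (auto simp: Sym_iff)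
qed

definition MP :: "nat list \<Rightarrow> nat \<Rightarrow> (nat list \<times> nat set) set" where
  "MP p n = {(\<sigma>, P). \<sigma> \<in> Sym n \<and> P \<subseteq> OC p \<sigma>}"

definition T :: "nat list \<Rightarrow> nat \<Rightarrow> nat \<Rightarrow> nat" where
  "T p n j = card {A. A \<in> MP p n \<and> card (snd A) = j}"

definition cov :: "nat \<Rightarrow> nat set \<Rightarrow> nat \<Rightarrow> bool" where
  "cov m P y \<longleftrightarrow> (\<exists>x\<in>P. x \<le> y \<and> y + 2 \<le> x + m)"

definition cmp :: "nat list \<Rightarrow> nat \<Rightarrow> (nat list \<times> nat set) set" where
  "cmp p l = {(\<sigma>, P). \<sigma> \<in> Sym l \<and> P \<subseteq> OC p \<sigma> \<and> (\<forall>y. y + 1 < l \<longrightarrow> cov (length p) P y)}"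

definition rr :: "nat list \<Rightarrow> nat \<Rightarrow> nat \<Rightarrow> nat" where
  "rr p l k = card {A. A \<in> cmp p l \<and> card (snd A) = k}"

lemma finite_MP: "p \<noteq> [] \<Longrightarrow> finite (MP p n)"
proof -
  assume p: "p \<noteq> []"
  have "MP p n \<subseteq> Sym n \<times> Pow {..<n}"
    using OC_sub[OF p] Sym_length by (fastforce simp: MP_def)
  then show ?thesis using finite_Sym finite_subset by blast
qed

lemma cmp_sub_MP: "cmp p l \<subseteq> MP p l"
  by (auto simp: cmp_def MP_def)

lemma finite_comp: "p \<noteq> [] \<Longrightarrow> finite (cmp p l)"
  using cmp_sub_MP finite_MP finite_subset by blast

definition fc :: "nat \<Rightarrow> nat \<Rightarrow> nat set \<Rightarrow> nat" where
  "fc m n P = (LEAST l. 1 \<le> l \<and> (l = n \<or> \<not> cov m P (l - 1)))"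

lemma fc_props:
  assumes "1 \<le> n"
  shows "1 \<le> fc m n P" "fc m n P \<le> n" "\<And>y. y + 1 < fc m n P \<Longrightarrow> cov m P y"
    "fc m n P = n \<or> \<not> cov m P (fc m n P - 1)"
proof -
  let ?Q = "\<lambda>l. 1 \<le> l \<and> (l = n \<or> \<not> cov m P (l - 1))"
  have Qn: "?Q n" using assms by simp
  have "?Q (fc m n P)" unfolding fc_def by (rule LeastI[of ?Q, OF Qn])
  then show "1 \<le> fc m n P" "fc m n P = n \<or> \<not> cov m P (fc m n P - 1)" by auto
  show "fc m n P \<le> n" unfolding fc_def by (rule Least_le[of ?Q, OF Qn])
  fix y assume y: "y + 1 < fc m n P"
  then have "\<not> ?Q (y + 1)" unfolding fc_def by (rule not_less_Least)
  moreover have "y + 1 \<noteq> n" using y \<open>fc m n P \<le> n\<close> by simp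
  ultimately show "cov m P y" by simp
qed

lemma fc_eqI:
  assumes "1 \<le> l" "l \<le> n" "\<And>y. y + 1 < l \<Longrightarrow> cov m P y" "l = n \<or> \<not> cov m P (l - 1)"
  shows "fc m n P = l"
  unfolding fc_def
proof (rule Least_equality)
  show "1 \<le> l \<and> (l = n \<or> \<not> cov m P (l - 1))" using assms by simp
  fix l' assume l': "1 \<le> l' \<and> (l' = n \<or> \<not> cov m P (l' - 1))"
  show "l \<le> l'"
  proof (rule ccontr)
    assume "\<not> l \<le> l'"
    then have "l' < l" by simp
    then have "cov m P (l' - 1)" "l' \<noteq> n" using assms(2) assms(3)[of "l' - 1"] l' by auto
    then show False using l' by simp
  qed
qed

lemma fc_bound:
  assumes n: "1 \<le> n" and P: "P \<subseteq> OC p \<sigma>" and len: "length \<sigma> = n"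
    and x: "x \<in> P" "x < fc (length p) n P"
  shows "x + length p \<le> fc (length p) n P"
proof (rule ccontr)
  let ?l = "fc (length p) n P"
  assume "\<not> x + length p \<le> ?l"
  then have lt: "?l < x + length p" by simp
  have "x + length p \<le> n" using P x len by (auto simp: OC_def occ_def)
  then have "?l \<noteq> n" using lt by simp
  then have "\<not> cov (length p) P (?l - 1)" using fc_props(4)[OF n] by auto
  moreover have "cov (length p) P (?l - 1)" unfolding cov_def
    using x lt fc_props(1)[OF n] by (intro bexI[of _ x]) auto
  ultimately show False by simp
qed

lemma cov_mono: "cov m P y \<Longrightarrow> P \<subseteq> Q \<Longrightarrow> cov m Q y"
  unfolding cov_def by blast

lemma Sym_take: "\<sigma> \<in> Sym n \<Longrightarrow> l \<le> n \<Longrightarrow> st (take l \<sigma>) \<in> Sym l"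
proof -
  assume a: "\<sigma> \<in> Sym n" "l \<le> n"
  then have "distinct (take l \<sigma>)" "length (take l \<sigma>) = l"
    using Sym_length[OF a(1)] by (auto simp: Sym_iff)
  then show ?thesis using st_Sym by metis
qed

lemma Sym_drop: "\<sigma> \<in> Sym n \<Longrightarrow> st (drop l \<sigma>) \<in> Sym (n - l)"
proof -
  assume a: "\<sigma> \<in> Sym n"
  then have "distinct (drop l \<sigma>)" "length (drop l \<sigma>) = n - l"
    using Sym_length[OF a(1)] by (auto simp: Sym_iff)
  then show ?thesis using st_Sym by metis
qed

lemma G_maps:
  assumes p: "p \<noteq> []" and n: "1 \<le> n" and \<sigma>: "\<sigma> \<in> Sym n" and P: "P \<subseteq> OC p \<sigma>"
    and l: "fc (length p) n P = l"
  shows "set (take l \<sigma>) \<subseteq> {1..n}" "card (set (take l \<sigma>)) = l"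
    "(st (take l \<sigma>), {x \<in> P. x < l}) \<in> cmp p l"
    "(st (drop l \<sigma>), (\<lambda>x. x - l) ` {x \<in> P. l \<le> x}) \<in> MP p (n - l)"
    "card {x \<in> P. x < l} + card ((\<lambda>x. x - l) ` {x \<in> P. l \<le> x}) = card P"
proof -
  let ?m = "length p"
  have len: "length \<sigma> = n" using \<sigma> Sym_length by blast
  have set\<sigma>: "set \<sigma> = {1..n}" "distinct \<sigma>" using \<sigma> by (auto simp: Sym_iff)
  have l1: "1 \<le> l" "l \<le> n" using fc_props[OF n] l by auto
  show "set (take l \<sigma>) \<subseteq> {1..n}" using set\<sigma> set_take_subset by metis
  show "card (set (take l \<sigma>)) = l" using set\<sigma> l1 len by (simp add: distinct_card)
  have bound: "x + ?m \<le> l" if "x \<in> P" "x < l" for x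
    using fc_bound[OF n P len] that l by blast
  have "{x \<in> P. x < l} \<subseteq> OC p (st (take l \<sigma>))"
  proof
    fix x assume x: "x \<in> {x \<in> P. x < l}"
    then have "occ p \<sigma> x" using P by (auto simp: OC_def)
    then show "x \<in> OC p (st (take l \<sigma>))"
      using occ_take[OF bound] x l1 len by (auto simp: OC_def occ_st)
  qed
  moreover have "cov ?m {x \<in> P. x < l} y" if "y + 1 < l" for y
  proof -
    have "cov ?m P y" using fc_props(3)[OF n] that l by blast
    then obtain x where "x \<in> P" "x \<le> y" "y + 2 \<le> x + ?m" by (auto simp: cov_def)
    then show ?thesis using that unfolding cov_def by (intro bexI[of _ x]) auto
  qed
  ultimately show "(st (take l \<sigma>), {x \<in> P. x < l}) \<in> cmp p l"
    using Sym_take[OF \<sigma> l1(2)] by (simp add: cmp_def)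
  have "(\<lambda>x. x - l) ` {x \<in> P. l \<le> x} \<subseteq> OC p (st (drop l \<sigma>))"
  proof
    fix y assume "y \<in> (\<lambda>x. x - l) ` {x \<in> P. l \<le> x}"
    then obtain x where x: "x \<in> P" "l \<le> x" "y = x - l" by auto
    then have "occ p \<sigma> (l + y)" using P by (auto simp: OC_def)
    then show "y \<in> OC p (st (drop l \<sigma>))"
      using occ_drop[of l \<sigma> p y] l1 len by (simp add: OC_def occ_st)
  qed
  then show "(st (drop l \<sigma>), (\<lambda>x. x - l) ` {x \<in> P. l \<le> x}) \<in> MP p (n - l)"
    using Sym_drop[OF \<sigma>] by (simp add: MP_def)
  have fP: "finite P" using P finite_OC[OF p] finite_subset by blast
  have "inj_on (\<lambda>x. x - l) {x \<in> P. l \<le> x}" by (auto simp: inj_on_def)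
  then have c2: "card ((\<lambda>x. x - l) ` {x \<in> P. l \<le> x}) = card {x \<in> P. l \<le> x}"
    by (rule card_image)
  have "P = {x \<in> P. x < l} \<union> {x \<in> P. l \<le> x}" by auto
  moreover have "{x \<in> P. x < l} \<inter> {x \<in> P. l \<le> x} = {}" by auto
  ultimately have "card P = card {x \<in> P. x < l} + card {x \<in> P. l \<le> x}"
    using fP by (metis (no_types, lifting) card_Un_disjoint finite_Un)
  then show "card {x \<in> P. x < l} + card ((\<lambda>x. x - l) ` {x \<in> P. l \<le> x}) = card P"
    using c2 by simp
qed

lemma H_maps:
  assumes p: "p \<noteq> []" and l: "1 \<le> l" "l \<le> n" and V: "V \<subseteq> {1..n}" "card V = l"
    and c: "(c, P1) \<in> cmp p l" and s: "(s, P2) \<in> MP p (n - l)"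
  shows "inst V c @ inst ({1..n} - V) s \<in> Sym n"
    "P1 \<union> (\<lambda>x. x + l) ` P2 \<subseteq> OC p (inst V c @ inst ({1..n} - V) s)"
    "card (P1 \<union> (\<lambda>x. x + l) ` P2) = card P1 + card P2"
    "fc (length p) n (P1 \<union> (\<lambda>x. x + l) ` P2) = l"
    "\<And>x. x \<in> P1 \<Longrightarrow> x + length p \<le> l"
proof -
  let ?m = "length p" and ?W = "{1..n} - V"
  have fV: "finite V" using V finite_subset by blast
  have fW: "finite ?W" by simp
  have cW: "card ?W = n - l" using V by (simp add: card_Diff_subset fV)
  have cS: "c \<in> Sym (card V)" "P1 \<subseteq> OC p c" "\<And>y. y + 1 < l \<Longrightarrow> cov ?m P1 y"
    using c V by (auto simp: cmp_def)
  have sS: "s \<in> Sym (card ?W)" "P2 \<subseteq> OC p s" using s cW by (auto simp: MP_def)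
  note iV = inst_props[OF fV cS(1)] and iW = inst_props[OF fW sS(1)]
  have lenc: "length (inst V c) = l" using cS(1) V Sym_length by simp
  have "set (inst V c @ inst ?W s) = {1..n}" using iV iW V by auto
  moreover have "distinct (inst V c @ inst ?W s)" using iV iW by auto
  ultimately show "inst V c @ inst ?W s \<in> Sym n" by (simp add: Sym_iff)
  show b: "x + ?m \<le> l" if "x \<in> P1" for x
    using cS(2) that Sym_length[OF cS(1)] V by (auto simp: OC_def occ_def)
  have "P1 \<subseteq> OC p (inst V c @ inst ?W s)"
  proof
    fix x assume x: "x \<in> P1"
    then have "occ p c x" using cS(2) by (auto simp: OC_def)
    then show "x \<in> OC p (inst V c @ inst ?W s)"
      using occ_append1[of x p "inst V c" "inst ?W s"] b[OF x] lenc occ_inst[OF fV cS(1)]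
      by (simp add: OC_def)
  qed
  moreover have "(\<lambda>x. x + l) ` P2 \<subseteq> OC p (inst V c @ inst ?W s)"
  proof
    fix y assume "y \<in> (\<lambda>x. x + l) ` P2"
    then obtain x where x: "x \<in> P2" "y = x + l" by auto
    then have "occ p s x" using sS(2) by (auto simp: OC_def)
    then show "y \<in> OC p (inst V c @ inst ?W s)"
      using occ_append2[of p "inst V c" "inst ?W s" x] lenc occ_inst[OF fW sS(1)] x
      by (simp add: OC_def add.commute)
  qed
  ultimately show "P1 \<union> (\<lambda>x. x + l) ` P2 \<subseteq> OC p (inst V c @ inst ?W s)" by blast
  have pm: "?m \<ge> 1" using p by (cases p) auto
  have lt: "x < l" if "x \<in> P1" for x using b[OF that] pm by simp
  have disj: "P1 \<inter> (\<lambda>x. x + l) ` P2 = {}" using lt by force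
  have fin: "finite P1" "finite P2" using cS(2) sS(2) finite_OC[OF p] finite_subset by blast+
  show "card (P1 \<union> (\<lambda>x. x + l) ` P2) = card P1 + card P2"
    using disj fin by (simp add: card_Un_disjoint card_image inj_on_def)
  show "fc ?m n (P1 \<union> (\<lambda>x. x + l) ` P2) = l"
  proof (rule fc_eqI)
    show "1 \<le> l" "l \<le> n" using l by auto
    show "cov ?m (P1 \<union> (\<lambda>x. x + l) ` P2) y" if "y + 1 < l" for y
      using cS(3)[OF that] cov_mono by blast
    show "l = n \<or> \<not> cov ?m (P1 \<union> (\<lambda>x. x + l) ` P2) (l - 1)"
    proof (cases "l = n")
      case True then show ?thesis by simp
    next
      case False
      have "\<not> cov ?m (P1 \<union> (\<lambda>x. x + l) ` P2) (l - 1)"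
      proof
        assume "cov ?m (P1 \<union> (\<lambda>x. x + l) ` P2) (l - 1)"
        then obtain x where x: "x \<in> P1 \<union> (\<lambda>x. x + l) ` P2" "x \<le> l - 1" "l - 1 + 2 \<le> x + ?m"
          by (auto simp: cov_def)
        then have "x \<in> P1" using l by auto
        then show False using b x l by fastforce
      qed
      then show ?thesis by simp
    qed
  qed
qed

lemma HG:
  assumes n: "1 \<le> n" and \<sigma>: "\<sigma> \<in> Sym n" and l: "l \<le> n"
  shows "inst (set (take l \<sigma>)) (st (take l \<sigma>)) @ inst ({1..n} - set (take l \<sigma>)) (st (drop l \<sigma>)) = \<sigma>"
    "{x \<in> P. x < l} \<union> (\<lambda>x. x + l) ` ((\<lambda>x. x - l) ` {x \<in> P. l \<le> x}) = P"
proof -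
  have d: "distinct \<sigma>" "set \<sigma> = {1..n}" using \<sigma> by (auto simp: Sym_iff)
  have "set \<sigma> = set (take l \<sigma>) \<union> set (drop l \<sigma>)"
    by (metis append_take_drop_id set_append)
  moreover have "set (take l \<sigma>) \<inter> set (drop l \<sigma>) = {}"
    using d(1) by (metis append_take_drop_id distinct_append)
  ultimately have e: "{1..n} - set (take l \<sigma>) = set (drop l \<sigma>)" using d(2) by blast
  show "inst (set (take l \<sigma>)) (st (take l \<sigma>)) @ inst ({1..n} - set (take l \<sigma>)) (st (drop l \<sigma>)) = \<sigma>"
    unfolding e using d(1) inst_unique by (simp add: distinct_take distinct_drop)
  show "{x \<in> P. x < l} \<union> (\<lambda>x. x + l) ` ((\<lambda>x. x - l) ` {x \<in> P. l \<le> x}) = P"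
    by (auto simp: image_image image_iff)
qed

lemma GH:
  assumes p: "p \<noteq> []" and l: "1 \<le> l" "l \<le> n" and V: "V \<subseteq> {1..n}" "card V = l"
    and c: "(c, P1) \<in> cmp p l" and s: "(s, P2) \<in> MP p (n - l)"
  shows "set (take l (inst V c @ inst ({1..n} - V) s)) = V"
    "st (take l (inst V c @ inst ({1..n} - V) s)) = c"
    "st (drop l (inst V c @ inst ({1..n} - V) s)) = s"
    "{x \<in> P1 \<union> (\<lambda>x. x + l) ` P2. x < l} = P1"
    "(\<lambda>x. x - l) ` {x \<in> P1 \<union> (\<lambda>x. x + l) ` P2. l \<le> x} = P2"
proof -
  let ?W = "{1..n} - V"
  have fV: "finite V" using V finite_subset by blast
  have fW: "finite ?W" by simp
  have cW: "card ?W = n - l" using V by (simp add: card_Diff_subset fV)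
  have cS: "c \<in> Sym (card V)" using c V by (auto simp: cmp_def)
  have sS: "s \<in> Sym (card ?W)" using s cW by (auto simp: MP_def)
  note iV = inst_props[OF fV cS] and iW = inst_props[OF fW sS]
  have lenc: "length (inst V c) = l" using cS V Sym_length by simp
  show "set (take l (inst V c @ inst ?W s)) = V" using lenc iV by simp
  show "st (take l (inst V c @ inst ?W s)) = c" using lenc iV by simp
  show "st (drop l (inst V c @ inst ?W s)) = s" using lenc iW by simp
  have lt: "x < l" if "x \<in> P1" for x using H_maps(5)[OF p l V c s that] p by (cases p) auto
  show "{x \<in> P1 \<union> (\<lambda>x. x + l) ` P2. x < l} = P1" using lt by auto
  have "{x \<in> P1 \<union> (\<lambda>x. x + l) ` P2. l \<le> x} = (\<lambda>x. x + l) ` P2" using lt by force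
  then show "(\<lambda>x. x - l) ` {x \<in> P1 \<union> (\<lambda>x. x + l) ` P2. l \<le> x} = P2"
    by (simp add: image_image)
qed

definition Gf :: "nat \<Rightarrow> nat list \<times> nat set \<Rightarrow> nat set \<times> (nat list \<times> nat set) \<times> (nat list \<times> nat set)" where
  "Gf l A = (set (take l (fst A)), (st (take l (fst A)), {x \<in> snd A. x < l}),
              (st (drop l (fst A)), (\<lambda>x. x - l) ` {x \<in> snd A. l \<le> x}))"

definition Hf :: "nat \<Rightarrow> nat \<Rightarrow> nat set \<times> (nat list \<times> nat set) \<times> (nat list \<times> nat set) \<Rightarrow> nat list \<times> nat set" where
  "Hf n l B = (inst (fst B) (fst (fst (snd B))) @ inst ({1..n} - fst B) (fst (snd (snd B))),
               snd (fst (snd B)) \<union> (\<lambda>x. x + l) ` snd (snd (snd B)))"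

lemma bij_Dl:
  assumes p: "p \<noteq> []" and l: "1 \<le> l" "l \<le> n"
  shows "bij_betw (Gf l) {A. A \<in> MP p n \<and> card (snd A) = j \<and> fc (length p) n (snd A) = l}
     ({V. V \<subseteq> {1..n} \<and> card V = l} \<times>
      {AB. fst AB \<in> cmp p l \<and> snd AB \<in> MP p (n - l) \<and> card (snd (fst AB)) + card (snd (snd AB)) = j})"
proof (rule bij_betwI[where g = "Hf n l"])
  have n: "1 \<le> n" using l by simp
  show "Gf l \<in> {A. A \<in> MP p n \<and> card (snd A) = j \<and> fc (length p) n (snd A) = l} \<rightarrow>
     {V. V \<subseteq> {1..n} \<and> card V = l} \<times>
      {AB. fst AB \<in> cmp p l \<and> snd AB \<in> MP p (n - l) \<and> card (snd (fst AB)) + card (snd (snd AB)) = j}"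
  proof
    fix A assume "A \<in> {A. A \<in> MP p n \<and> card (snd A) = j \<and> fc (length p) n (snd A) = l}"
    then obtain \<sigma> P where A: "A = (\<sigma>, P)" "\<sigma> \<in> Sym n" "P \<subseteq> OC p \<sigma>" "card P = j"
      "fc (length p) n P = l" by (cases A) (auto simp: MP_def)
    note G = G_maps[OF p n A(2) A(3) A(5)]
    show "Gf l A \<in> {V. V \<subseteq> {1..n} \<and> card V = l} \<times>
      {AB. fst AB \<in> cmp p l \<and> snd AB \<in> MP p (n - l) \<and> card (snd (fst AB)) + card (snd (snd AB)) = j}"
      using G A by (simp add: Gf_def)
  qed
  show "Hf n l \<in> {V. V \<subseteq> {1..n} \<and> card V = l} \<times>
      {AB. fst AB \<in> cmp p l \<and> snd AB \<in> MP p (n - l) \<and> card (snd (fst AB)) + card (snd (snd AB)) = j}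
     \<rightarrow> {A. A \<in> MP p n \<and> card (snd A) = j \<and> fc (length p) n (snd A) = l}"
  proof
    fix B assume "B \<in> {V. V \<subseteq> {1..n} \<and> card V = l} \<times>
      {AB. fst AB \<in> cmp p l \<and> snd AB \<in> MP p (n - l) \<and> card (snd (fst AB)) + card (snd (snd AB)) = j}"
    then obtain V c P1 s P2 where B: "B = (V, (c, P1), (s, P2))" "V \<subseteq> {1..n}" "card V = l"
      "(c, P1) \<in> cmp p l" "(s, P2) \<in> MP p (n - l)" "card P1 + card P2 = j"
      by (cases B) auto
    note H = H_maps[OF p l B(2) B(3) B(4) B(5)]
    show "Hf n l B \<in> {A. A \<in> MP p n \<and> card (snd A) = j \<and> fc (length p) n (snd A) = l}"
      using H B by (simp add: Hf_def MP_def)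
  qed
  fix A assume "A \<in> {A. A \<in> MP p n \<and> card (snd A) = j \<and> fc (length p) n (snd A) = l}"
  then obtain \<sigma> P where A: "A = (\<sigma>, P)" "\<sigma> \<in> Sym n" "P \<subseteq> OC p \<sigma>"
    by (cases A) (auto simp: MP_def)
  show "Hf n l (Gf l A) = A" using HG[OF n A(2) l(2)] A(1) by (simp add: Gf_def Hf_def)
next
  fix B assume "B \<in> {V. V \<subseteq> {1..n} \<and> card V = l} \<times>
      {AB. fst AB \<in> cmp p l \<and> snd AB \<in> MP p (n - l) \<and> card (snd (fst AB)) + card (snd (snd AB)) = j}"
  then obtain V c P1 s P2 where B: "B = (V, (c, P1), (s, P2))" "V \<subseteq> {1..n}" "card V = l"
    "(c, P1) \<in> cmp p l" "(s, P2) \<in> MP p (n - l)"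
    by (cases B) auto
  note H = GH[OF p l B(2) B(3) B(4) B(5)]
  show "Gf l (Hf n l B) = B" using H B(1) by (simp add: Gf_def Hf_def)
qed

lemma card_pairs_sum:
  assumes "finite A" "finite B"
  shows "card {AB. fst AB \<in> A \<and> snd AB \<in> B \<and> f (fst AB) + g (snd AB) = (j::nat)} =
    (\<Sum>k\<le>j. card {a \<in> A. f a = k} * card {b \<in> B. g b = j - k})"
proof -
  have e: "{AB. fst AB \<in> A \<and> snd AB \<in> B \<and> f (fst AB) + g (snd AB) = j} =
    (\<Union>k\<in>{..j}. {a \<in> A. f a = k} \<times> {b \<in> B. g b = j - k})" by auto
  show ?thesis unfolding e
    by (subst card_UN_disjoint) (use assms in \<open>auto simp: card_cartesian_product\<close>)
qed

lemma card_Dl: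
  assumes p: "p \<noteq> []" and l: "1 \<le> l" "l \<le> n"
  shows "card {A. A \<in> MP p n \<and> card (snd A) = j \<and> fc (length p) n (snd A) = l} =
    (n choose l) * (\<Sum>k\<le>j. rr p l k * T p (n - l) (j - k))"
proof -
  have "card {A. A \<in> MP p n \<and> card (snd A) = j \<and> fc (length p) n (snd A) = l} =
    card ({V. V \<subseteq> {1..n} \<and> card V = l} \<times>
      {AB. fst AB \<in> cmp p l \<and> snd AB \<in> MP p (n - l) \<and> card (snd (fst AB)) + card (snd (snd AB)) = j})"
    using bij_betw_same_card[OF bij_Dl[OF p l]] .
  also have "\<dots> = (n choose l) * card {AB. fst AB \<in> cmp p l \<and> snd AB \<in> MP p (n - l) \<and> card (snd (fst AB)) + card (snd (snd AB)) = j}"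
    by (simp add: card_cartesian_product n_subsets)
  also have "card {AB. fst AB \<in> cmp p l \<and> snd AB \<in> MP p (n - l) \<and> card (snd (fst AB)) + card (snd (snd AB)) = j}
     = (\<Sum>k\<le>j. rr p l k * T p (n - l) (j - k))"
    unfolding rr_def T_def
    using card_pairs_sum[OF finite_comp[OF p] finite_MP[OF p], where f="\<lambda>a. card (snd a)" and g="\<lambda>b. card (snd b)" and j=j]
    by simp
  finally show ?thesis .
qed

lemma T_rec:
  assumes p: "p \<noteq> []" and n: "1 \<le> n"
  shows "T p n j = (\<Sum>l\<in>{1..n}. (n choose l) * (\<Sum>k\<le>j. rr p l k * T p (n - l) (j - k)))"
proof -
  have e: "{A. A \<in> MP p n \<and> card (snd A) = j} =
    (\<Union>l\<in>{1..n}. {A. A \<in> MP p n \<and> card (snd A) = j \<and> fc (length p) n (snd A) = l})"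
    using fc_props(1,2)[OF n] by auto
  have "T p n j = (\<Sum>l\<in>{1..n}. card {A. A \<in> MP p n \<and> card (snd A) = j \<and> fc (length p) n (snd A) = l})"
    unfolding T_def e
    by (rule card_UN_disjoint) (use finite_MP[OF p] in \<open>auto\<close>)
  also have "\<dots> = (\<Sum>l\<in>{1..n}. (n choose l) * (\<Sum>k\<le>j. rr p l k * T p (n - l) (j - k)))"
    by (rule sum.cong) (use card_Dl[OF p] in auto)
  finally show ?thesis .
qed


lemma Sym_0: "Sym 0 = {[]}"
  unfolding Sym_iff by (auto simp: Sym_iff)

lemma T_0: "p \<noteq> [] \<Longrightarrow> T p 0 j = (if j = 0 then 1 else 0)"
proof -
  assume p: "p \<noteq> []"
  have o: "OC p [] = {}" using OC_sub[OF p, of "[]"] by simp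
  have m: "MP p 0 = {([], {})}" unfolding MP_def Sym_0 using o by auto
  show ?thesis
  proof (cases "j = 0")
    case True
    then have "{A. A \<in> MP p 0 \<and> card (snd A) = j} = {([], {})}" unfolding m by auto
    then show ?thesis unfolding T_def using True by simp
  next
    case False
    then have e: "{A. A \<in> MP p 0 \<and> card (snd A) = j} = {}" unfolding m by auto
    show ?thesis unfolding T_def e using False by simp
  qed
qed

lemma T_sum: "p \<noteq> [] \<Longrightarrow> T p n j = (\<Sum>\<sigma>\<in>Sym n. card (OC p \<sigma>) choose j)"
proof -
  assume p: "p \<noteq> []"
  have "{A. A \<in> MP p n \<and> card (snd A) = j} = (SIGMA \<sigma>:Sym n. {P. P \<subseteq> OC p \<sigma> \<and> card P = j})"
    by (auto simp: MP_def)
  moreover have "finite {P. P \<subseteq> OC p \<sigma> \<and> card P = j}" for \<sigma>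
  proof -
    have "{P. P \<subseteq> OC p \<sigma> \<and> card P = j} \<subseteq> Pow (OC p \<sigma>)" by blast
    moreover have "finite (Pow (OC p \<sigma>))" using finite_OC[OF p] by simp
    ultimately show ?thesis by (rule finite_subset)
  qed
  ultimately have "T p n j = (\<Sum>\<sigma>\<in>Sym n. card {P. P \<subseteq> OC p \<sigma> \<and> card P = j})"
    unfolding T_def using finite_Sym by simp
  also have "\<dots> = (\<Sum>\<sigma>\<in>Sym n. card (OC p \<sigma>) choose j)"
    by (rule sum.cong) (simp_all add: n_subsets finite_OC[OF p])
  finally show ?thesis .
qed

lemma em_le: "p \<noteq> [] \<Longrightarrow> \<sigma> \<in> Sym n \<Longrightarrow> em p \<sigma> \<le> n"
proof -
  assume p: "p \<noteq> []" and s: "\<sigma> \<in> Sym n"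
  have "card (OC p \<sigma>) \<le> card {..<length \<sigma>}" by (rule card_mono) (simp_all add: OC_sub[OF p])
  then show ?thesis using Sym_length[OF s] by (simp add: em_OC)
qed

lemma sum_by_em:
  assumes p: "p \<noteq> []"
  shows "(\<Sum>\<sigma>\<in>Sym n. f (em p \<sigma>)) = (\<Sum>k\<le>n. of_nat (a_count p n k) * f k)"
proof -
  have "(\<Sum>\<sigma>\<in>Sym n. f (em p \<sigma>)) = (\<Sum>k\<le>n. \<Sum>\<sigma>\<in>{\<sigma>. \<sigma> \<in> Sym n \<and> em p \<sigma> = k}. f (em p \<sigma>))"
    by (rule sum.group[symmetric]) (use finite_Sym em_le[OF p] in auto)
  also have "\<dots> = (\<Sum>k\<le>n. of_nat (a_count p n k) * f k)"
    by (rule sum.cong) (auto simp: a_count_def)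
  finally show ?thesis .
qed

lemma T_acount: "p \<noteq> [] \<Longrightarrow> T p n j = (\<Sum>k\<le>n. a_count p n k * (k choose j))"
  using sum_by_em[where p=p and n=n and f="\<lambda>k. k choose j"] by (simp add: T_sum em_OC)

lemma strong_T: "p \<noteq> [] \<Longrightarrow> q \<noteq> [] \<Longrightarrow> strongly_c_wilf_equiv p q \<Longrightarrow> T p n j = T q n j"
  by (simp add: T_acount strongly_c_wilf_equiv_def)

lemma alt_choose: "e \<le> n \<Longrightarrow> (\<Sum>j\<le>n. (-1::int)^j * int (e choose j)) = (if e = 0 then 1 else 0)"
proof -
  assume e: "e \<le> n"
  have "(\<Sum>j\<le>n. (-1::int)^j * int (e choose j)) = (\<Sum>j\<le>e. (-1::int)^j * int (e choose j))"
    by (rule sum.mono_neutral_right) (use e in auto)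
  also have "\<dots> = (if e = 0 then 1 else 0)"
    using choose_alternating_sum[of e] by (cases "e = 0") auto
  finally show ?thesis .
qed

lemma acount0_T:
  assumes p: "p \<noteq> []"
  shows "int (a_count p n 0) = (\<Sum>j\<le>n. (-1)^j * int (T p n j))"
proof -
  have "(\<Sum>j\<le>n. (-1)^j * int (T p n j)) = (\<Sum>j\<le>n. \<Sum>\<sigma>\<in>Sym n. (-1::int)^j * int (em p \<sigma> choose j))"
    by (simp add: T_sum[OF p] em_OC sum_distrib_left)
  also have "\<dots> = (\<Sum>\<sigma>\<in>Sym n. \<Sum>j\<le>n. (-1::int)^j * int (em p \<sigma> choose j))"
    by (rule sum.swap)
  also have "\<dots> = (\<Sum>\<sigma>\<in>Sym n. (if em p \<sigma> = 0 then 1 else 0))"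
    by (rule sum.cong) (simp_all add: alt_choose em_le[OF p])
  also have "\<dots> = int (card {\<sigma> \<in> Sym n. em p \<sigma> = 0})"
  proof -
    have e: "Sym n \<inter> {\<sigma>. em p \<sigma> = 0} = {\<sigma> \<in> Sym n. em p \<sigma> = 0}" by blast
    have "(\<Sum>\<sigma>\<in>Sym n. (if em p \<sigma> = 0 then 1 else 0)) = int (card (Sym n \<inter> {\<sigma>. em p \<sigma> = 0}))"
      using finite_Sym by (simp add: sum.If_cases)
    then show ?thesis unfolding e .
  qed
  finally show ?thesis by (simp add: a_count_def Collect_conj_eq)
qed

lemma T_cwilf: "p \<noteq> [] \<Longrightarrow> q \<noteq> [] \<Longrightarrow> (\<And>n j. T p n j = T q n j) \<Longrightarrow> c_wilf_equiv p q"
proof -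
  assume p: "p \<noteq> []" and q: "q \<noteq> []" and e: "\<And>n j. T p n j = T q n j"
  have "int (a_count p n 0) = int (a_count q n 0)" for n
    unfolding acount0_T[OF p] acount0_T[OF q] e ..
  then show ?thesis unfolding c_wilf_equiv_def by simp
qed

lemma T_split:
  assumes p: "p \<noteq> []" and l: "1 \<le> l"
  shows "T p l k = (\<Sum>l'\<in>{1..<l}. (l choose l') * (\<Sum>k'\<le>k. rr p l' k' * T p (l - l') (k - k'))) + rr p l k"
proof -
  have "{1..l} = insert l {1..<l}" using l by auto
  then have "T p l k = (l choose l) * (\<Sum>k'\<le>k. rr p l k' * T p (l - l) (k - k')) +
      (\<Sum>l'\<in>{1..<l}. (l choose l') * (\<Sum>k'\<le>k. rr p l' k' * T p (l - l') (k - k')))"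
    using T_rec[OF p l] by simp
  moreover have "(\<Sum>k'\<le>k. rr p l k' * T p (l - l) (k - k')) = (\<Sum>k'\<le>k. if k' = k then rr p l k else 0)"
    by (rule sum.cong) (auto simp: T_0[OF p])
  moreover have "(\<Sum>k'\<le>k. if k' = k then rr p l k else 0) = rr p l k"
    by (simp add: sum.delta)
  ultimately show ?thesis by simp
qed

lemma T_eq_rr_eq:
  assumes p: "p \<noteq> []" and q: "q \<noteq> []" and e: "\<And>n j. T p n j = T q n j"
  shows "1 \<le> l \<Longrightarrow> rr p l k = rr q l k"
proof (induction l arbitrary: k rule: less_induct)
  case (less l)
  have "(\<Sum>l'\<in>{1..<l}. (l choose l') * (\<Sum>k'\<le>k. rr p l' k' * T p (l - l') (k - k'))) =
        (\<Sum>l'\<in>{1..<l}. (l choose l') * (\<Sum>k'\<le>k. rr q l' k' * T q (l - l') (k - k')))"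
    by (rule sum.cong) (simp_all add: less.IH e)
  then show ?case using T_split[OF p less.prems, of k] T_split[OF q less.prems, of k] e[of l k] by simp
qed

lemma rr_eq_T_eq:
  assumes p: "p \<noteq> []" and q: "q \<noteq> []" and e: "\<And>l k. 1 \<le> l \<Longrightarrow> rr p l k = rr q l k"
  shows "T p n j = T q n j"
proof (induction n arbitrary: j rule: less_induct)
  case (less n)
  show ?case
  proof (cases "n = 0")
    case True then show ?thesis by (simp add: T_0 p q)
  next
    case False
    then have n: "1 \<le> n" by simp
    show ?thesis unfolding T_rec[OF p n] T_rec[OF q n]
      by (rule sum.cong) (simp_all add: less.IH e)
  qed
qed

lemma nonov_gap:
  assumes no: "non_overlapping p" and o1: "occ p \<sigma> x" and o2: "occ p \<sigma> x'" and lt: "x < x'"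
  shows "length p - 1 \<le> x' - x"
proof (rule ccontr)
  let ?m = "length p"
  assume "\<not> ?m - 1 \<le> x' - x"
  then have dl: "x' - x < ?m - 1" by simp
  define d where "d = x' - x"
  have d1: "1 \<le> d" "d \<le> ?m - 1" "d \<noteq> ?m - 1" using lt dl d_def by auto
  let ?u = "take ?m (drop x \<sigma>)" and ?v = "take ?m (drop x' \<sigma>)"
  have su: "st ?u = p" and sv: "st ?v = p" using o1 o2 by (auto simp: occ_def)
  have x': "x' = x + d" using d_def lt by simp
  have "drop d ?u = take (?m - d) ?v" unfolding x' by (simp add: drop_take add.commute)
  moreover have "st (drop d p) = st (drop d ?u)" using su st_sub_drop by metis
  moreover have "st (take (?m - d) p) = st (take (?m - d) ?v)" using sv st_sub_take by metis
  ultimately have "st (drop d p) = st (take (?m - d) p)" by simp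
  then have "d \<in> overlap_set p" unfolding overlap_set_def using d1 by simp
  then show False using no d1 by (simp add: non_overlapping_def)
qed

lemma cmp_finite: "(\<sigma>, P) \<in> cmp p l \<Longrightarrow> p \<noteq> [] \<Longrightarrow> finite P"
  using finite_OC[of p \<sigma>] finite_subset by (auto simp: cmp_def)

definition bI :: "nat \<Rightarrow> nat \<Rightarrow> nat set" where "bI m x = {x..<x + (m - 1)}"

lemma cmp_union:
  assumes c: "(\<sigma>, P) \<in> cmp p l" and m: "2 \<le> length p"
  shows "(\<Union>x\<in>P. bI (length p) x) = {..<l - 1}"
proof
  have len: "length \<sigma> = l" using c Sym_length by (auto simp: cmp_def)
  show "(\<Union>x\<in>P. bI (length p) x) \<subseteq> {..<l - 1}"
  proof
    fix y assume "y \<in> (\<Union>x\<in>P. bI (length p) x)"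
    then obtain x where x: "x \<in> P" "x \<le> y" "y < x + (length p - 1)" by (auto simp: bI_def)
    then have "x + length p \<le> l" using c len by (auto simp: cmp_def OC_def occ_def)
    then show "y \<in> {..<l - 1}" using x m by simp
  qed
  show "{..<l - 1} \<subseteq> (\<Union>x\<in>P. bI (length p) x)"
  proof
    fix y assume "y \<in> {..<l - 1}"
    then have "y + 1 < l" by simp
    then have "cov (length p) P y" using c by (auto simp: cmp_def)
    then obtain x where "x \<in> P" "x \<le> y" "y + 2 \<le> x + length p" by (auto simp: cov_def)
    then show "y \<in> (\<Union>x\<in>P. bI (length p) x)" by (auto simp: bI_def)
  qed
qed

lemma card_bI: "card (bI m x) = m - 1" by (simp add: bI_def)

lemma cmp_card_le:
  assumes c: "(\<sigma>, P) \<in> cmp p l" and m: "2 \<le> length p"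
  shows "l - 1 \<le> card P * (length p - 1)"
proof -
  have fP: "finite P" using cmp_finite[OF c] m by (cases p) auto
  have "l - 1 = card (\<Union>x\<in>P. bI (length p) x)" using cmp_union[OF c m] by simp
  also have "\<dots> \<le> (\<Sum>x\<in>P. card (bI (length p) x))" by (rule card_UN_le[OF fP])
  also have "\<dots> = card P * (length p - 1)" by (simp add: card_bI)
  finally show ?thesis .
qed

lemma cmp_card_nonov:
  assumes c: "(\<sigma>, P) \<in> cmp p l" and m: "2 \<le> length p" and no: "non_overlapping p"
  shows "l - 1 = card P * (length p - 1)"
proof -
  have fP: "finite P" using cmp_finite[OF c] m by (cases p) auto
  have PO: "P \<subseteq> OC p \<sigma>" using c by (auto simp: cmp_def)
  have disj: "bI (length p) x \<inter> bI (length p) y = {}" if "x \<in> P" "y \<in> P" "x \<noteq> y" for x y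
  proof -
    have gap: "length p - 1 \<le> y - x" if "x < y" "x \<in> P" "y \<in> P" for x y
      using nonov_gap[OF no _ _ that(1)] PO that by (auto simp: OC_def)
    show ?thesis
    proof (cases "x < y")
      case True
      then have "length p - 1 \<le> y - x" using gap that by blast
      then show ?thesis by (auto simp: bI_def)
    next
      case False
      then have "y < x" using that by auto
      then have "length p - 1 \<le> x - y" using gap that by blast
      then show ?thesis by (auto simp: bI_def)
    qed
  qed
  have "l - 1 = card (\<Union>x\<in>P. bI (length p) x)" using cmp_union[OF c m] by simp
  also have "\<dots> = (\<Sum>x\<in>P. card (bI (length p) x))"
    by (rule card_UN_disjoint[OF fP]) (use disj in \<open>auto simp: bI_def\<close>)
  also have "\<dots> = card P * (length p - 1)" by (simp add: card_bI)
  finally show ?thesis .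
qed

lemma card_UN_eq_disj:
  assumes "finite P" "\<forall>x\<in>P. finite (A x)" "card (\<Union>x\<in>P. A x) = (\<Sum>x\<in>P. card (A x))"
  shows "\<forall>x\<in>P. \<forall>y\<in>P. x \<noteq> y \<longrightarrow> A x \<inter> A y = {}"
  using assms
proof (induction P rule: finite_induct)
  case empty then show ?case by simp
next
  case (insert z P)
  let ?U = "\<Union>x\<in>P. A x"
  have fz: "finite (A z)" and fU: "finite ?U" using insert.prems insert.hyps(1) by auto
  have "card (A z) + card ?U = card (A z \<union> ?U) + card (A z \<inter> ?U)"
    by (rule card_Un_Int[OF fz fU])
  moreover have "card (A z \<union> ?U) = card (A z) + (\<Sum>x\<in>P. card (A x))"
    using insert by simp
  moreover have "card ?U \<le> (\<Sum>x\<in>P. card (A x))" by (rule card_UN_le[OF insert.hyps(1)])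
  ultimately have c0: "card (A z \<inter> ?U) = 0" and cU: "card ?U = (\<Sum>x\<in>P. card (A x))" by linarith+
  have i0: "A z \<inter> ?U = {}" using c0 fz by simp
  have ih: "\<forall>x\<in>P. \<forall>y\<in>P. x \<noteq> y \<longrightarrow> A x \<inter> A y = {}" using insert.IH insert.prems cU by simp
  show ?case using i0 ih by blast
qed

definition chs :: "nat \<Rightarrow> nat \<Rightarrow> nat set" where "chs m k = (\<lambda>i. i * (m - 1)) ` {..<k}"

lemma card_chs: "2 \<le> m \<Longrightarrow> card (chs m k) = k"
  unfolding chs_def by (subst card_image) (auto simp: inj_on_def)

lemma cmp_chain:
  assumes c: "(\<sigma>, P) \<in> cmp p l" and m: "2 \<le> length p" and eq: "l - 1 = card P * (length p - 1)"
  shows "P = chs (length p) (card P)"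
proof -
  let ?c = "length p - 1" and ?k = "card P"
  have fP: "finite P" using cmp_finite[OF c] m by (cases p) auto
  have "card (\<Union>x\<in>P. bI (length p) x) = (\<Sum>x\<in>P. card (bI (length p) x))"
    using cmp_union[OF c m] eq by (simp add: card_bI)
  then have disj: "\<forall>x\<in>P. \<forall>y\<in>P. x \<noteq> y \<longrightarrow> bI (length p) x \<inter> bI (length p) y = {}"
    by (intro card_UN_eq_disj[OF fP]) (auto simp: bI_def)
  have cov: "\<exists>x\<in>P. x \<le> y \<and> y < x + ?c" if "y < ?k * ?c" for y
  proof -
    have "y \<in> (\<Union>x\<in>P. bI (length p) x)" using cmp_union[OF c m] eq that by simp
    then show ?thesis by (auto simp: bI_def)
  qed
  have mem: "i * ?c \<in> P" if "i < ?k" for i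
    using that
  proof (induction i)
    case 0
    have "0 < ?k * ?c" using 0 m by simp
    then obtain x where "x \<in> P" "x \<le> 0" using cov by blast
    then show ?case by simp
  next
    case (Suc i)
    have ic: "i * ?c \<in> P" using Suc by simp
    have "Suc i * ?c < ?k * ?c" using Suc.prems m by (intro mult_strict_right_mono) auto
    then obtain x where x: "x \<in> P" "x \<le> Suc i * ?c" "Suc i * ?c < x + ?c" using cov by blast
    show ?case
    proof (cases "x = Suc i * ?c")
      case True then show ?thesis using x by simp
    next
      case False
      then have x1: "x < Suc i * ?c" "i * ?c < x" using x by auto
      then have "x \<in> bI (length p) x \<inter> bI (length p) (i * ?c)" using m by (auto simp: bI_def)
      moreover have "x \<noteq> i * ?c" using x1 by simp
      ultimately show ?thesis using disj x(1) ic by blast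
    qed
  qed
  have sub: "chs (length p) ?k \<subseteq> P" using mem by (auto simp: chs_def)
  have "card (chs (length p) ?k) = card P" using card_chs[OF m] by simp
  then show ?thesis using card_subset_eq[OF fP sub] by simp
qed

definition ch :: "nat list \<Rightarrow> nat \<Rightarrow> nat" where
  "ch p k = card {\<sigma> \<in> Sym (k * (length p - 1) + 1). \<forall>i<k. occ p \<sigma> (i * (length p - 1))}"

lemma rr_chain:
  assumes m: "2 \<le> length p"
  shows "rr p (k * (length p - 1) + 1) k = ch p k"
proof -
  let ?c = "length p - 1" let ?l = "k * ?c + 1"
  have e: "{A. A \<in> cmp p ?l \<and> card (snd A) = k} =
     (\<lambda>\<sigma>. (\<sigma>, chs (length p) k)) ` {\<sigma> \<in> Sym ?l. \<forall>i<k. occ p \<sigma> (i * ?c)}"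
  proof
    show "{A. A \<in> cmp p ?l \<and> card (snd A) = k} \<subseteq> (\<lambda>\<sigma>. (\<sigma>, chs (length p) k)) ` {\<sigma> \<in> Sym ?l. \<forall>i<k. occ p \<sigma> (i * ?c)}"
    proof
      fix A assume "A \<in> {A. A \<in> cmp p ?l \<and> card (snd A) = k}"
      then obtain \<sigma> P where A: "A = (\<sigma>, P)" "(\<sigma>, P) \<in> cmp p ?l" "card P = k" by (cases A) auto
      have "?l - 1 = card P * ?c" using A by simp
      then have P: "P = chs (length p) k" using cmp_chain[OF A(2) m] A(3) by simp
      have "\<sigma> \<in> Sym ?l" "P \<subseteq> OC p \<sigma>" using A(2) by (auto simp: cmp_def)
      then have "\<sigma> \<in> {\<sigma> \<in> Sym ?l. \<forall>i<k. occ p \<sigma> (i * ?c)}" using P by (auto simp: chs_def OC_def)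
      then show "A \<in> (\<lambda>\<sigma>. (\<sigma>, chs (length p) k)) ` {\<sigma> \<in> Sym ?l. \<forall>i<k. occ p \<sigma> (i * ?c)}"
        using A P by blast
    qed
    show "(\<lambda>\<sigma>. (\<sigma>, chs (length p) k)) ` {\<sigma> \<in> Sym ?l. \<forall>i<k. occ p \<sigma> (i * ?c)} \<subseteq> {A. A \<in> cmp p ?l \<and> card (snd A) = k}"
    proof
      fix A assume "A \<in> (\<lambda>\<sigma>. (\<sigma>, chs (length p) k)) ` {\<sigma> \<in> Sym ?l. \<forall>i<k. occ p \<sigma> (i * ?c)}"
      then obtain \<sigma> where A: "A = (\<sigma>, chs (length p) k)" "\<sigma> \<in> Sym ?l" "\<forall>i<k. occ p \<sigma> (i * ?c)" by auto
      have "chs (length p) k \<subseteq> OC p \<sigma>" using A by (auto simp: chs_def OC_def)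
      moreover have "cov (length p) (chs (length p) k) y" if "y + 1 < ?l" for y
      proof -
        have c1: "1 \<le> ?c" using m by simp
        define i where "i = y div ?c"
        have dm: "i * ?c + y mod ?c = y" unfolding i_def by (rule div_mult_mod_eq)
        have "y mod ?c < ?c" using c1 by simp
        then have "i * ?c \<le> y" "y < i * ?c + ?c" using dm by linarith+
        moreover have "i < k"
        proof -
          have "y < k * ?c" using that by simp
          then show ?thesis unfolding i_def using c1 by (simp add: div_less_iff_less_mult)
        qed
        ultimately show ?thesis unfolding cov_def chs_def using m
          by (intro bexI[of _ "i * ?c"]) auto
      qed
      ultimately show "A \<in> {A. A \<in> cmp p ?l \<and> card (snd A) = k}"
        using A card_chs[OF m] by (auto simp: cmp_def)
    qed
  qed
  show ?thesis unfolding rr_def ch_def e by (subst card_image) (auto simp: inj_on_def)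
qed

lemma rr_nonov_zero:
  assumes m: "2 \<le> length p" and no: "non_overlapping p" and l: "l \<noteq> k * (length p - 1) + 1" and l1: "1 \<le> l"
  shows "rr p l k = 0"
proof -
  have e: "{A. A \<in> cmp p l \<and> card (snd A) = k} = {}"
  proof (rule ccontr)
    assume "{A. A \<in> cmp p l \<and> card (snd A) = k} \<noteq> {}"
    then obtain \<sigma> P where "(\<sigma>, P) \<in> cmp p l" "card P = k" by auto
    then have "l - 1 = k * (length p - 1)" using cmp_card_nonov m no by blast
    then show False using l l1 by simp
  qed
  show ?thesis unfolding rr_def e by simp
qed

lemma rr_nonov_eq:
  assumes mp: "2 \<le> length p" and lq: "length q = length p" and np: "non_overlapping p"
    and nq: "non_overlapping q" and chk: "\<And>k. ch p k = ch q k" and l1: "1 \<le> l"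
  shows "rr p l k = rr q l k"
proof (cases "l = k * (length p - 1) + 1")
  case True
  then show ?thesis using rr_chain[OF mp, of k] rr_chain[of q k] mp lq chk by simp
next
  case False
  then show ?thesis using rr_nonov_zero[OF mp np False l1] rr_nonov_zero[of q l k] mp lq nq l1 by simp
qed

definition pidx :: "nat list \<Rightarrow> nat \<Rightarrow> nat" where
  "pidx p v = the_inv_into {..<length p} (\<lambda>i. p ! i) v"

lemma inj_nth_p: "distinct p \<Longrightarrow> inj_on (\<lambda>i. p ! i) {..<length p}"
  by (simp add: inj_on_def nth_eq_iff_index_eq)

lemma pidx_nth: "distinct p \<Longrightarrow> i < length p \<Longrightarrow> pidx p (p ! i) = i"
  unfolding pidx_def by (rule the_inv_into_f_f) (auto simp: inj_nth_p)

lemma nth_pidx: "distinct p \<Longrightarrow> v \<in> set p \<Longrightarrow> pidx p v < length p \<and> p ! pidx p v = v"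
proof -
  assume d: "distinct p" and v: "v \<in> set p"
  have im: "v \<in> (\<lambda>i. p ! i) ` {..<length p}" using v by (auto simp: in_set_conv_nth)
  show ?thesis unfolding pidx_def
    using the_inv_into_into[OF inj_nth_p[OF d] im, of "{..<length p}"] f_the_inv_into_f[OF inj_nth_p[OF d] im]
    by auto
qed

definition psi :: "nat list \<Rightarrow> nat list \<Rightarrow> nat \<Rightarrow> nat" where "psi p q j = pidx p (q ! j)"

locale chpair =
  fixes p q :: "nat list" and m :: nat
  assumes p: "p \<in> Sym m" and q: "q \<in> Sym m" and m: "2 \<le> m"
    and e0: "p ! 0 = q ! 0" and e1: "p ! (m - 1) = q ! (m - 1)"
begin

lemma lens: "length p = m" "length q = m" using p q Sym_length by auto
lemma dists: "distinct p" "distinct q" "set p = set q" using p q by (auto simp: Sym_iff)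

lemma psi_lt: "j < m \<Longrightarrow> psi p q j < m \<and> p ! psi p q j = q ! j"
  using nth_pidx[OF dists(1), of "q ! j"] dists lens unfolding psi_def by auto

lemma psi_inv: "j < m \<Longrightarrow> psi q p (psi p q j) = j"
proof -
  assume j: "j < m"
  have "psi q p (psi p q j) = pidx q (p ! psi p q j)" by (simp add: psi_def)
  also have "\<dots> = pidx q (q ! j)" using psi_lt[OF j] by simp
  also have "\<dots> = j" using pidx_nth[OF dists(2)] j lens by simp
  finally show ?thesis .
qed

lemma psi_0: "psi p q 0 = 0"
  unfolding psi_def using e0 pidx_nth[OF dists(1), of 0] lens m by simp

lemma psi_c: "psi p q (m - 1) = m - 1"
  unfolding psi_def using e1 pidx_nth[OF dists(1), of "m - 1"] lens m by simp

lemma psi_int: "r < m - 1 \<Longrightarrow> psi p q r < m - 1"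
proof -
  assume r: "r < m - 1"
  have a: "psi p q r < m" "p ! psi p q r = q ! r" using psi_lt r by auto
  have "psi p q r \<noteq> m - 1"
  proof
    assume "psi p q r = m - 1"
    then have "q ! r = q ! (m - 1)" using a e1 by simp
    then show False using r m dists(2) lens by (simp add: nth_eq_iff_index_eq)
  qed
  then show ?thesis using a by simp
qed

end

lemma chpair_sym: "chpair p q m \<Longrightarrow> chpair q p m"
  unfolding chpair_def by auto

definition Psi :: "nat list \<Rightarrow> nat list \<Rightarrow> nat \<Rightarrow> nat \<Rightarrow> nat" where
  "Psi p q c t = t - t mod c + psi p q (t mod c)"

context chpair
begin

abbreviation "c \<equiv> m - 1"

lemma c_pos: "0 < c" using m by simp

lemma Psi_block: "r < c \<Longrightarrow> Psi p q c (i * c + r) = i * c + psi p q r"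
proof -
  assume r: "r < c"
  have "(i * c + r) mod c = r" using r by simp
  then show ?thesis unfolding Psi_def by simp
qed

lemma Psi_block': "j < m \<Longrightarrow> Psi p q c (i * c + j) = i * c + psi p q j"
proof -
  assume j: "j < m"
  show ?thesis
  proof (cases "j < c")
    case True then show ?thesis using Psi_block by simp
  next
    case False
    then have jc: "j = c" using j by simp
    have "Psi p q c (i * c + j) = Psi p q c (Suc i * c + 0)" using jc by (simp add: add.commute)
    also have "\<dots> = Suc i * c + psi p q 0" using Psi_block c_pos by blast
    also have "\<dots> = i * c + psi p q j" using jc psi_0 psi_c by simp
    finally show ?thesis .
  qed
qed

lemma Psi_decomp: "t = (t div c) * c + t mod c" "t mod c < c"
  using c_pos div_mult_mod_eq[of t c] by auto

lemma Psi_lt: "t < k * c + 1 \<Longrightarrow> Psi p q c t < k * c + 1"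
proof -
  assume t: "t < k * c + 1"
  define i where "i = t div c"
  define r where "r = t mod c"
  have tr: "t = i * c + r" "r < c" using Psi_decomp unfolding i_def r_def by auto
  have P: "Psi p q c t = i * c + psi p q r" using Psi_block tr by simp
  show ?thesis
  proof (cases "i < k")
    case True
    then have "Suc i * c \<le> k * c" by (intro mult_le_mono1) simp
    then have "i * c + c \<le> k * c" by simp
    then show ?thesis using P psi_int[OF tr(2)] by simp
  next
    case False
    then have "k * c \<le> i * c" by simp
    have "i * c \<le> k * c" using t tr by linarith
    then have "i \<le> k" by (metis c_pos mult_le_cancel2)
    then have ik: "i = k" using False by simp
    then have "r = 0" using t tr by simp
    note ik this
    then show ?thesis using P psi_0 by simp
  qed
qed

end

lemma Psi_inv:
  assumes cp: "chpair p q m"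
  shows "Psi q p (m - 1) (Psi p q (m - 1) t) = t"
proof -
  interpret chpair p q m by (rule cp)
  interpret cq: chpair q p m by (rule chpair_sym[OF cp])
  define i where "i = t div c"
  define r where "r = t mod c"
  have tr: "t = i * c + r" "r < c" using Psi_decomp unfolding i_def r_def by auto
  have "Psi p q c t = i * c + psi p q r" using Psi_block tr by simp
  moreover have "psi p q r < c" using psi_int tr by simp
  ultimately have "Psi q p c (Psi p q c t) = i * c + psi q p (psi p q r)" using cq.Psi_block by simp
  also have "\<dots> = t" using psi_inv tr by simp
  finally show ?thesis .
qed

definition Phi :: "nat list \<Rightarrow> nat list \<Rightarrow> nat \<Rightarrow> nat list \<Rightarrow> nat list" where
  "Phi p q N \<sigma> = map (\<lambda>t. \<sigma> ! Psi p q (length p - 1) t) [0..<N]"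

lemma length_Phi[simp]: "length (Phi p q N \<sigma>) = N"
  by (simp add: Phi_def del: upt_Suc)

lemma nth_Phi: "t < N \<Longrightarrow> Phi p q N \<sigma> ! t = \<sigma> ! Psi p q (length p - 1) t"
  by (simp add: Phi_def del: upt_Suc)

lemma set_Phi: "set (Phi p q N \<sigma>) = (\<lambda>t. \<sigma> ! Psi p q (length p - 1) t) ` {..<N}"
  by (auto simp: Phi_def atLeast0LessThan simp del: upt_Suc)

lemma Psi_onto:
  assumes cp: "chpair p q m"
  shows "Psi p q (m - 1) ` {..<k * (m - 1) + 1} = {..<k * (m - 1) + 1}"
proof -
  interpret chpair p q m by (rule cp)
  interpret cq: chpair q p m by (rule chpair_sym[OF cp])
  show ?thesis
  proof
    show "Psi p q c ` {..<k * c + 1} \<subseteq> {..<k * c + 1}" using Psi_lt by auto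
    show "{..<k * c + 1} \<subseteq> Psi p q c ` {..<k * c + 1}"
    proof
      fix t assume t: "t \<in> {..<k * c + 1}"
      have "t = Psi p q c (Psi q p c t)" using Psi_inv[OF chpair_sym[OF cp]] by simp
      moreover have "Psi q p c t \<in> {..<k * c + 1}" using cq.Psi_lt t by simp
      ultimately show "t \<in> Psi p q c ` {..<k * c + 1}" by blast
    qed
  qed
qed

lemma Phi_Sym:
  assumes cp: "chpair p q m" and s: "\<sigma> \<in> Sym (k * (m - 1) + 1)"
  shows "Phi p q (k * (m - 1) + 1) \<sigma> \<in> Sym (k * (m - 1) + 1)"
proof -
  interpret chpair p q m by (rule cp)
  let ?N = "k * c + 1"
  have ls: "length \<sigma> = ?N" using s Sym_length by blast
  have ds: "distinct \<sigma>" "set \<sigma> = {1..?N}" using s by (auto simp: Sym_iff)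
  have "set (Phi p q ?N \<sigma>) = (\<lambda>t. \<sigma> ! t) ` (Psi p q c ` {..<?N})"
    unfolding set_Phi using lens by (simp add: image_image)
  also have "\<dots> = (\<lambda>t. \<sigma> ! t) ` {..<?N}" using Psi_onto[OF cp] by simp
  also have "\<dots> = set \<sigma>" using ls by (auto simp: in_set_conv_nth)
  finally have st: "set (Phi p q ?N \<sigma>) = {1..?N}" using ds by simp
  have "inj_on (\<lambda>t. \<sigma> ! Psi p q c t) {0..<?N}"
  proof (rule inj_onI)
    fix t t' assume tt: "t \<in> {0..<?N}" "t' \<in> {0..<?N}" "\<sigma> ! Psi p q c t = \<sigma> ! Psi p q c t'"
    then have "Psi p q c t = Psi p q c t'"
      using Psi_lt ds(1) ls by (simp add: nth_eq_iff_index_eq)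
    then show "t = t'" using Psi_inv[OF cp] by metis
  qed
  then have "distinct (Phi p q ?N \<sigma>)" unfolding Phi_def using lens by (simp add: distinct_map del: upt_Suc)
  then show ?thesis using st by (simp add: Sym_iff)
qed

lemma Phi_inv:
  assumes cp: "chpair p q m" and s: "\<sigma> \<in> Sym (k * (m - 1) + 1)"
  shows "Phi q p (k * (m - 1) + 1) (Phi p q (k * (m - 1) + 1) \<sigma>) = \<sigma>"
proof -
  interpret chpair p q m by (rule cp)
  interpret cq: chpair q p m by (rule chpair_sym[OF cp])
  let ?N = "k * c + 1"
  have ls: "length \<sigma> = ?N" using s Sym_length by blast
  show ?thesis
  proof (rule nth_equalityI)
    show "length (Phi q p ?N (Phi p q ?N \<sigma>)) = length \<sigma>" using ls by simp
    fix t assume "t < length (Phi q p ?N (Phi p q ?N \<sigma>))"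
    then have t: "t < ?N" by simp
    have "Phi q p ?N (Phi p q ?N \<sigma>) ! t = \<sigma> ! Psi p q c (Psi q p c t)"
      using t cq.Psi_lt[OF t] lens by (simp add: nth_Phi del: upt_Suc)
    also have "\<dots> = \<sigma> ! t" using Psi_inv[OF chpair_sym[OF cp]] by simp
    finally show "Phi q p ?N (Phi p q ?N \<sigma>) ! t = \<sigma> ! t" .
  qed
qed

lemma Phi_occ:
  assumes cp: "chpair p q m" and s: "\<sigma> \<in> Sym (k * (m - 1) + 1)" and i: "i < k"
    and o: "occ p \<sigma> (i * (m - 1))"
  shows "occ q (Phi p q (k * (m - 1) + 1) \<sigma>) (i * (m - 1))"
proof -
  interpret chpair p q m by (rule cp)
  interpret cq: chpair q p m by (rule chpair_sym[OF cp])
  let ?N = "k * c + 1"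
  have ls: "length \<sigma> = ?N" using s Sym_length by blast
  have ds: "distinct \<sigma>" using s by (auto simp: Sym_iff)
  have "Suc i * c \<le> k * c" using i by (intro mult_le_mono1) simp
  then have bnd: "i * c + m \<le> ?N" using m by simp
  let ?w = "take m (drop (i * c) \<sigma>)" and ?u = "take m (drop (i * c) (Phi p q ?N \<sigma>))"
  have lw: "length ?w = m" "length ?u = m" using bnd ls by auto
  have w: "?w ! j = \<sigma> ! (i * c + j)" if "j < m" for j using that bnd ls by simp
  have u: "?u ! j = ?w ! psi p q j" if "j < m" for j
  proof -
    have "?u ! j = \<sigma> ! Psi p q c (i * c + j)" using that bnd lens by (simp add: nth_Phi del: upt_Suc)
    also have "\<dots> = \<sigma> ! (i * c + psi p q j)" using Psi_block' that by simp
    also have "\<dots> = ?w ! psi p q j" using w psi_lt that by simp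
    finally show ?thesis .
  qed
  have sw: "st ?w = p" using o lens by (simp add: occ_def)
  have "set ?u = set ?w"
  proof
    show "set ?u \<subseteq> set ?w"
    proof
      fix v assume "v \<in> set ?u"
      then obtain j where j: "j < m" "v = ?u ! j" using lw by (auto simp: in_set_conv_nth)
      then have "v = ?w ! psi p q j" using u by simp
      then show "v \<in> set ?w" using psi_lt[OF j(1)] lw by (metis nth_mem)
    qed
    show "set ?w \<subseteq> set ?u"
    proof
      fix v assume "v \<in> set ?w"
      then obtain j where j: "j < m" "v = ?w ! j" using lw by (auto simp: in_set_conv_nth)
      have "?u ! psi q p j = ?w ! psi p q (psi q p j)" using u cq.psi_lt j by simp
      also have "\<dots> = v" using cq.psi_inv j by simp
      finally show "v \<in> set ?u" using cq.psi_lt[OF j(1)] lw by (metis nth_mem)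
    qed
  qed
  have "st ?u = q"
  proof (rule nth_equalityI)
    show "length (st ?u) = length q" using lw lens by simp
    fix j assume "j < length (st ?u)"
    then have j: "j < m" using lw by simp
    have "st ?u ! j = Suc (rk (set ?u) (?u ! j))" by (rule st_nth) (use lw j in simp)
    also have "\<dots> = Suc (rk (set ?w) (?w ! psi p q j))"
      by (simp only: u[OF j] \<open>set ?u = set ?w\<close>)
    also have "\<dots> = st ?w ! psi p q j" by (rule st_nth[symmetric]) (use lw psi_lt j in simp)
    also have "\<dots> = q ! j" using sw psi_lt j by simp
    finally show "st ?u ! j = q ! j" .
  qed
  then show ?thesis using bnd lens ls by (simp add: occ_def del: upt_Suc)
qed

lemma ch_le:
  assumes cp: "chpair p q m"
  shows "ch p k \<le> ch q k"
proof -
  interpret chpair p q m by (rule cp)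
  let ?N = "k * c + 1"
  let ?A = "{\<sigma> \<in> Sym ?N. \<forall>i<k. occ p \<sigma> (i * c)}" and ?B = "{\<sigma> \<in> Sym ?N. \<forall>i<k. occ q \<sigma> (i * c)}"
  have "inj_on (Phi p q ?N) ?A"
    by (rule inj_on_inverseI[where g = "Phi q p ?N"]) (use Phi_inv[OF cp] in auto)
  moreover have "Phi p q ?N ` ?A \<subseteq> ?B" using Phi_Sym[OF cp] Phi_occ[OF cp] by auto
  moreover have "finite ?B" using finite_Sym by simp
  ultimately have "card ?A \<le> card ?B" by (rule card_inj_on_le)
  then show ?thesis unfolding ch_def using lens by simp
qed

lemma ch_eq:
  assumes "p \<in> Sym m" "q \<in> Sym m" "2 \<le> m" "p ! 0 = q ! 0" "p ! (m - 1) = q ! (m - 1)"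
  shows "ch p k = ch q k"
proof -
  have cp: "chpair p q m" using assms by (simp add: chpair_def)
  show ?thesis by (rule le_antisym[OF ch_le[OF cp] ch_le[OF chpair_sym[OF cp]]])
qed

lemma card_less_x:
  assumes "finite S" "(x::nat) \<in> S"
  shows "card S = card {v \<in> S. v < x} + 1 + card {v \<in> S. x < v}"
proof -
  have "S = {v \<in> S. v < x} \<union> ({x} \<union> {v \<in> S. x < v})" using assms by auto
  moreover have "card ({v \<in> S. v < x} \<union> ({x} \<union> {v \<in> S. x < v})) =
      card {v \<in> S. v < x} + card ({x} \<union> {v \<in> S. x < v})"
    by (rule card_Un_disjoint) (use assms in auto)
  moreover have "card ({x} \<union> {v \<in> S. x < v}) = 1 + card {v \<in> S. x < v}"
    by (subst card_Un_disjoint) (use assms in auto)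
  ultimately show ?thesis by simp
qed

lemma card_below: "y \<ge> 1 \<Longrightarrow> card {v \<in> {1..N}. v < y} = min (y - 1) N"
proof -
  assume "y \<ge> 1"
  have "{v \<in> {1..N}. v < y} = {1..min (y - 1) N}" by auto
  then show ?thesis by simp
qed

locale ch2 =
  fixes p :: "nat list" and m :: nat
  assumes p: "p \<in> Sym m" and m: "2 \<le> m"
begin

abbreviation "a \<equiv> p ! 0"
abbreviation "b \<equiv> p ! (m - 1)"
abbreviation "N \<equiv> 2 * m - 1"
abbreviation "x \<equiv> a + b - 1"

lemma lp: "length p = m" using p Sym_length by blast
lemma ab: "1 \<le> a" "a \<le> m" "1 \<le> b" "b \<le> m" "a \<noteq> b"
proof -
  have s: "set p = {1..m}" "distinct p" using p by (auto simp: Sym_iff)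
  have "a \<in> set p" "b \<in> set p" using lp m by auto
  then show "1 \<le> a" "a \<le> m" "1 \<le> b" "b \<le> m" using s by auto
  show "a \<noteq> b" using s lp m by (simp add: nth_eq_iff_index_eq)
qed

definition CH where "CH = {\<sigma> \<in> Sym N. occ p \<sigma> 0 \<and> occ p \<sigma> (m - 1)}"
definition SS where "SS = {S. S \<subseteq> {1..N} \<and> x \<in> S \<and> card {v \<in> S. v < x} = b - 1 \<and> card {v \<in> S. x < v} = m - b}"

lemma ch2_CH: "ch p 2 = card CH"
proof -
  have eq: "2 * (length p - 1) + 1 = N" using lp m by simp
  have "{\<sigma> \<in> Sym (2 * (length p - 1) + 1). \<forall>i<2. occ p \<sigma> (i * (length p - 1))} = CH"
    unfolding CH_def eq using lp m by (auto simp: less_2_cases_iff)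
  then show ?thesis unfolding ch_def by simp
qed

lemma F_maps:
  assumes s: "\<sigma> \<in> CH"
  shows "set (take m \<sigma>) \<in> SS" "\<sigma> ! (m - 1) = x"
proof -
  have \<sigma>: "\<sigma> \<in> Sym N" "occ p \<sigma> 0" "occ p \<sigma> (m - 1)" using s by (auto simp: CH_def)
  have ls: "length \<sigma> = N" using \<sigma> Sym_length by blast
  have ds: "distinct \<sigma>" "set \<sigma> = {1..N}" using \<sigma> by (auto simp: Sym_iff)
  let ?w1 = "take m \<sigma>" and ?w2 = "drop (m - 1) \<sigma>"
  let ?y = "\<sigma> ! (m - 1)"
  have lw: "length ?w1 = m" "length ?w2 = m" using ls m by auto
  have st1: "st ?w1 = p" using \<sigma>(2) lp by (simp add: occ_def)
  have st2: "st ?w2 = p" using \<sigma>(3) lp lw by (simp add: occ_def)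
  have dw: "distinct ?w1" "distinct ?w2" using ds by auto
  have y1: "?w1 ! (m - 1) = ?y" using m by simp
  have y2: "?w2 ! 0 = ?y" using m ls by simp
  have "b = st ?w1 ! (m - 1)" using st1 by simp
  also have "\<dots> = Suc (rk (set ?w1) ?y)" using st_nth[of "m - 1" ?w1] lw m y1 by simp
  finally have r1: "card {v \<in> set ?w1. v < ?y} = b - 1" by (simp add: rk_def)
  have "a = st ?w2 ! 0" using st2 by simp
  also have "\<dots> = Suc (rk (set ?w2) ?y)" using st_nth[of 0 ?w2] lw m y2 by simp
  finally have r2: "card {v \<in> set ?w2. v < ?y} = a - 1" by (simp add: rk_def)
  have un: "set ?w1 \<union> set ?w2 = {1..N}"
  proof -
    have "set \<sigma> = set (take (m - 1) \<sigma>) \<union> set ?w2" using set_append[of "take (m - 1) \<sigma>" "drop (m - 1) \<sigma>"] by simp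
    moreover have "set (take (m - 1) \<sigma>) \<subseteq> set ?w1" by (intro set_take_subset_set_take) simp
    moreover have "set ?w1 \<subseteq> set \<sigma>" by (rule set_take_subset)
    ultimately show ?thesis using ds by blast
  qed
  have int: "set ?w1 \<inter> set ?w2 \<subseteq> {?y}"
  proof
    fix v assume v: "v \<in> set ?w1 \<inter> set ?w2"
    then obtain i j where ij: "i < m" "v = \<sigma> ! i" "j < m" "v = \<sigma> ! (m - 1 + j)"
      using lw ls by (auto simp: in_set_conv_nth)
    then have "i = m - 1 + j" using ds(1) ls m by (simp add: nth_eq_iff_index_eq)
    then have "i = m - 1" using ij by simp
    then show "v \<in> {?y}" using ij by simp
  qed
  have "?y \<in> set \<sigma>" using ls m by (intro nth_mem) simp
  then have "?y \<in> {1..N}" using ds by simp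
  then have ypos: "1 \<le> ?y" "?y \<le> N" by simp_all
  have "{v \<in> {1..N}. v < ?y} = {v \<in> set ?w1. v < ?y} \<union> {v \<in> set ?w2. v < ?y}" using un by blast
  moreover have "{v \<in> set ?w1. v < ?y} \<inter> {v \<in> set ?w2. v < ?y} = {}" using int less_irrefl by blast
  ultimately have "card {v \<in> {1..N}. v < ?y} = (b - 1) + (a - 1)"
    using r1 r2 by (simp add: card_Un_disjoint)
  moreover have mn: "min (?y - 1) N = ?y - 1" using ypos(2) by linarith
  ultimately have "?y - 1 = (b - 1) + (a - 1)" using card_below[OF ypos(1), of N] by simp
  then show yx: "?y = x" using ab ypos by linarith
  let ?S = "set ?w1"
  have "?w1 ! (m - 1) \<in> set ?w1" using lw m by (intro nth_mem) simp
  then have xS: "x \<in> ?S" using y1 yx by simp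
  have cS: "card ?S = m" using dw lw by (simp add: distinct_card)
  have c3: "card ?S = card {v \<in> ?S. v < x} + 1 + card {v \<in> ?S. x < v}"
    using card_less_x[OF _ xS] by simp
  have r1': "card {v \<in> ?S. v < x} = b - 1" using r1 yx by simp
  have "card {v \<in> ?S. x < v} = m - b" using c3 cS r1' ab(3) by linarith
  moreover have "?S \<subseteq> {1..N}" using un by blast
  ultimately show "?S \<in> SS" unfolding SS_def using xS r1 yx by simp
qed

end

context ch2
begin

lemma take_inst: "\<sigma> \<in> CH \<Longrightarrow> take m \<sigma> = inst (set (take m \<sigma>)) p"
proof -
  assume s: "\<sigma> \<in> CH"
  then have "distinct \<sigma>" "occ p \<sigma> 0" by (auto simp: CH_def Sym_iff)
  then show ?thesis using inst_unique[of "take m \<sigma>"] lp by (simp add: occ_def)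
qed

lemma drop_inst: "\<sigma> \<in> CH \<Longrightarrow> drop (m - 1) \<sigma> = inst ({1..N} - set (take (m - 1) \<sigma>)) p"
proof -
  assume s: "\<sigma> \<in> CH"
  then have \<sigma>: "\<sigma> \<in> Sym N" "occ p \<sigma> (m - 1)" by (auto simp: CH_def)
  have ls: "length \<sigma> = N" using \<sigma> Sym_length by blast
  have ds: "distinct \<sigma>" "set \<sigma> = {1..N}" using \<sigma> by (auto simp: Sym_iff)
  have "set \<sigma> = set (take (m - 1) \<sigma>) \<union> set (drop (m - 1) \<sigma>)"
    using set_append[of "take (m - 1) \<sigma>" "drop (m - 1) \<sigma>"] by simp
  moreover have "set (take (m - 1) \<sigma>) \<inter> set (drop (m - 1) \<sigma>) = {}"
    using ds(1) distinct_append[of "take (m - 1) \<sigma>" "drop (m - 1) \<sigma>"] by simp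
  ultimately have e: "{1..N} - set (take (m - 1) \<sigma>) = set (drop (m - 1) \<sigma>)" using ds(2) by blast
  have "length (drop (m - 1) \<sigma>) = m" using ls m by simp
  then have "st (drop (m - 1) \<sigma>) = p" using \<sigma>(2) lp by (simp add: occ_def)
  then show ?thesis unfolding e using inst_unique[of "drop (m - 1) \<sigma>"] ds(1) by simp
qed

lemma F_inj: "inj_on (\<lambda>\<sigma>. set (take m \<sigma>)) CH"
proof (rule inj_onI)
  fix \<sigma> \<sigma>' assume s: "\<sigma> \<in> CH" "\<sigma>' \<in> CH" and e: "set (take m \<sigma>) = set (take m \<sigma>')"
  have t: "take m \<sigma> = take m \<sigma>'" using take_inst[OF s(1)] take_inst[OF s(2)] e by simp
  then have t': "take (m - 1) \<sigma> = take (m - 1) \<sigma>'"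
    by (metis min.absorb1 diff_le_self take_take)
  have d: "drop (m - 1) \<sigma> = drop (m - 1) \<sigma>'" using drop_inst[OF s(1)] drop_inst[OF s(2)] t' by simp
  show "\<sigma> = \<sigma>'" using t' d by (metis append_take_drop_id)
qed

lemma x_bounds: "1 \<le> x" "x \<le> N"
  using ab m by auto

lemma F_onto:
  assumes S: "S \<in> SS"
  shows "\<exists>\<sigma>\<in>CH. set (take m \<sigma>) = S"
proof -
  have SN: "S \<subseteq> {1..N}" and xS: "x \<in> S" and cl: "card {v \<in> S. v < x} = b - 1"
    and cg: "card {v \<in> S. x < v} = m - b" using S by (auto simp: SS_def)
  have fS: "finite S" using SN finite_subset by blast
  have cS: "card S = m" using card_less_x[OF fS xS] cl cg ab by simp
  define S2 where "S2 = ({1..N} - S) \<union> {x}"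
  have fS2: "finite S2" unfolding S2_def by simp
  have cD: "card ({1..N} - S) = N - m" using SN cS fS by (simp add: card_Diff_subset)
  have cS2: "card S2 = m" unfolding S2_def using cD xS m by (simp add: card_insert_if)
  have xS2: "x \<in> S2" by (simp add: S2_def)
  have pS: "p \<in> Sym (card S)" "p \<in> Sym (card S2)" using p cS cS2 by auto
  note i1 = inst_props[OF fS pS(1)] and i2 = inst_props[OF fS2 pS(2)]
  have rk1: "rk S x = b - 1" using cl by (simp add: rk_def)
  have "{v \<in> S2. v < x} = {v \<in> {1..N}. v < x} - {v \<in> S. v < x}" unfolding S2_def using SN by auto
  moreover have "{v \<in> S. v < x} \<subseteq> {v \<in> {1..N}. v < x}" using SN by auto
  moreover have "finite {v \<in> S. v < x}" using fS by simp
  ultimately have "card {v \<in> S2. v < x} = card {v \<in> {1..N}. v < x} - card {v \<in> S. v < x}"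
    by (simp add: card_Diff_subset)
  also have "\<dots> = (x - 1) - (b - 1)"
  proof -
    have "x - 1 \<le> N" using x_bounds by linarith
    then have "card {v \<in> {1..N}. v < x} = x - 1" using card_below[OF x_bounds(1), of N] by simp
    then show ?thesis using cl by simp
  qed
  finally have rk2: "rk S2 x = a - 1" using ab by (simp add: rk_def)
  let ?u = "inst S p" and ?v = "inst S2 p"
  have lu: "length ?u = m" "length ?v = m" using lp by auto
  have u_last: "?u ! (m - 1) = x"
  proof -
    have "?u ! (m - 1) = sel S (b - 1)" using lp m by (simp add: inst_def)
    also have "\<dots> = x" using sel_rk[OF fS xS] rk1 by simp
    finally show ?thesis .
  qed
  have v_first: "?v ! 0 = x"
  proof -
    have "?v ! 0 = sel S2 (a - 1)" using lp m by (simp add: inst_def)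
    also have "\<dots> = x" using sel_rk[OF fS2 xS2] rk2 by simp
    finally show ?thesis .
  qed
  have vx: "?v = x # tl ?v" using v_first lu m by (cases ?v) auto
  have ux: "drop (m - 1) ?u = [x]"
    using Cons_nth_drop_Suc[of "m - 1" ?u] lu m u_last by simp
  define \<sigma> where "\<sigma> = ?u @ tl ?v"
  have ls: "length \<sigma> = N" unfolding \<sigma>_def using lu m by simp
  have stl: "set (tl ?v) = S2 - {x}"
  proof -
    have "distinct (x # tl ?v)" using i2(2) vx by simp
    moreover have "set (x # tl ?v) = S2" using i2(1) vx by simp
    ultimately show ?thesis by auto
  qed
  have "set \<sigma> = {1..N}" unfolding \<sigma>_def using i1(1) stl SN xS by (auto simp: S2_def)
  moreover have "distinct \<sigma>" unfolding \<sigma>_def using i1 i2(2) stl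
    by (auto simp: S2_def distinct_tl)
  ultimately have sS: "\<sigma> \<in> Sym N" by (simp add: Sym_iff)
  have o1: "occ p \<sigma> 0" unfolding occ_def \<sigma>_def using lu i1(3) lp m by simp
  have "drop (m - 1) \<sigma> = ?v" unfolding \<sigma>_def using ux lu vx by simp
  then have o2: "occ p \<sigma> (m - 1)" unfolding occ_def using lu i2(3) lp ls m by simp
  have "set (take m \<sigma>) = S" unfolding \<sigma>_def using lu i1(1) by simp
  then show ?thesis using sS o1 o2 unfolding CH_def by blast
qed

lemma card_CH_SS: "card CH = card SS"
proof -
  have "(\<lambda>\<sigma>. set (take m \<sigma>)) ` CH = SS"
    using F_maps(1) F_onto by blast
  then show ?thesis using card_image[OF F_inj] by simp
qed

lemma card_SS: "card SS = (x - 1 choose (b - 1)) * ((N - x) choose (m - b))"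
proof -
  let ?L = "{1..<x}" and ?H = "{x<..N}"
  have bij: "bij_betw (\<lambda>S. (S \<inter> ?L, S \<inter> ?H)) SS
      ({A. A \<subseteq> ?L \<and> card A = b - 1} \<times> {B. B \<subseteq> ?H \<and> card B = m - b})"
  proof (rule bij_betwI[where g = "\<lambda>AB. fst AB \<union> snd AB \<union> {x}"])
    show "(\<lambda>S. (S \<inter> ?L, S \<inter> ?H)) \<in> SS \<rightarrow> {A. A \<subseteq> ?L \<and> card A = b - 1} \<times> {B. B \<subseteq> ?H \<and> card B = m - b}"
    proof
      fix S assume "S \<in> SS"
      then have S: "S \<subseteq> {1..N}" "card {v \<in> S. v < x} = b - 1" "card {v \<in> S. x < v} = m - b"
        by (auto simp: SS_def)
      have "S \<inter> ?L = {v \<in> S. v < x}" "S \<inter> ?H = {v \<in> S. x < v}" using S(1) by auto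
      then show "(S \<inter> ?L, S \<inter> ?H) \<in> {A. A \<subseteq> ?L \<and> card A = b - 1} \<times> {B. B \<subseteq> ?H \<and> card B = m - b}"
        using S by auto
    qed
    show "(\<lambda>AB. fst AB \<union> snd AB \<union> {x}) \<in> {A. A \<subseteq> ?L \<and> card A = b - 1} \<times> {B. B \<subseteq> ?H \<and> card B = m - b} \<rightarrow> SS"
    proof
      fix AB assume "AB \<in> {A. A \<subseteq> ?L \<and> card A = b - 1} \<times> {B. B \<subseteq> ?H \<and> card B = m - b}"
      then obtain A B where AB: "AB = (A, B)" "A \<subseteq> ?L" "card A = b - 1" "B \<subseteq> ?H" "card B = m - b" by auto
      have "{v \<in> A \<union> B \<union> {x}. v < x} = A" "{v \<in> A \<union> B \<union> {x}. x < v} = B" using AB by auto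
      moreover have "A \<union> B \<union> {x} \<subseteq> {1..N}" using AB x_bounds by auto
      ultimately show "(\<lambda>AB. fst AB \<union> snd AB \<union> {x}) AB \<in> SS" using AB by (simp add: SS_def)
    qed
    fix S assume "S \<in> SS"
    then have S: "S \<subseteq> {1..N}" "x \<in> S" by (auto simp: SS_def)
    then show "fst (S \<inter> ?L, S \<inter> ?H) \<union> snd (S \<inter> ?L, S \<inter> ?H) \<union> {x} = S"
      by auto
  next
    fix AB assume "AB \<in> {A. A \<subseteq> ?L \<and> card A = b - 1} \<times> {B. B \<subseteq> ?H \<and> card B = m - b}"
    then obtain A B where AB: "AB = (A, B)" "A \<subseteq> ?L" "B \<subseteq> ?H" by auto
    then show "((fst AB \<union> snd AB \<union> {x}) \<inter> ?L, (fst AB \<union> snd AB \<union> {x}) \<inter> ?H) = AB" by auto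
  qed
  have "card SS = card ({A. A \<subseteq> ?L \<and> card A = b - 1} \<times> {B. B \<subseteq> ?H \<and> card B = m - b})"
    by (rule bij_betw_same_card[OF bij])
  also have "\<dots> = (x - 1 choose (b - 1)) * ((N - x) choose (m - b))"
    by (simp add: card_cartesian_product n_subsets)
  finally show ?thesis .
qed

lemma ch2_formula: "ch p 2 = (x - 1 choose (b - 1)) * ((N - x) choose (m - b))"
  using ch2_CH card_CH_SS card_SS by simp

end

definition Wl :: "nat \<Rightarrow> nat \<Rightarrow> nat \<Rightarrow> nat list" where
  "Wl m a b = [a..<b] @ [Suc b..<m] @ [1..<a] @ [m, b]"

locale wit =
  fixes m a b :: nat
  assumes a1: "1 \<le> a" and ab: "a < b" and bm: "b < m" and sf: "a + b \<le> m + 1"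
    and ex: "\<not> (m = 4 \<and> a = 2 \<and> b = 3)"
begin

lemma lenW: "length (Wl m a b) = m"
  using a1 ab bm by (simp add: Wl_def)

lemma setW: "set (Wl m a b) = {1..m}"
  using a1 ab bm by (auto simp: Wl_def)

lemma distW: "distinct (Wl m a b)"
  using a1 ab bm by (auto simp: Wl_def)

lemma SymW: "Wl m a b \<in> Sym m"
  using setW distW by (simp add: Sym_iff)

lemma W1: "j < b - a \<Longrightarrow> Wl m a b ! j = a + j"
  using a1 ab bm by (simp add: Wl_def nth_append)

lemma Wsplit: "Wl m a b = [a..<b] @ ([Suc b..<m] @ ([1..<a] @ [m, b]))"
  by (simp add: Wl_def)

lemma W2: "b - a \<le> j \<Longrightarrow> j < m - a - 1 \<Longrightarrow> Wl m a b ! j = j + a + 1"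
proof -
  assume j: "b - a \<le> j" "j < m - a - 1"
  have e: "j = length [a..<b] + (j - (b - a))" using j by simp
  have k: "j - (b - a) < length [Suc b..<m]" using j ab bm by simp
  have "Wl m a b ! j = [Suc b..<m] ! (j - (b - a))"
    unfolding Wsplit by (subst e, subst nth_append_length_plus) (use k in \<open>simp add: nth_append\<close>)
  also have "\<dots> = Suc b + (j - (b - a))" using k by simp
  also have "\<dots> = j + a + 1" using j ab by simp
  finally show ?thesis .
qed

lemma W3: "m - a - 1 \<le> j \<Longrightarrow> j < m - 2 \<Longrightarrow> Wl m a b ! j = j + a + 2 - m"
proof -
  assume j: "m - a - 1 \<le> j" "j < m - 2"
  have e: "j = length [a..<b] + (length [Suc b..<m] + (j - (m - a - 1)))" using j ab bm by simp
  have k: "j - (m - a - 1) < length [1..<a]" using j ab bm by simp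
  have "Wl m a b ! j = [1..<a] ! (j - (m - a - 1))"
    unfolding Wsplit by (subst e, subst nth_append_length_plus, subst nth_append_length_plus) (use k in \<open>simp add: nth_append\<close>)
  also have "\<dots> = 1 + (j - (m - a - 1))" using k by simp
  also have "\<dots> = j + a + 2 - m" using j ab bm by simp
  finally show ?thesis .
qed

lemma W45: "Wl m a b ! (m - 2) = m" "Wl m a b ! (m - 1) = b"
proof -
  have e: "m - 2 = length [a..<b] + (length [Suc b..<m] + (length [1..<a] + 0))"
    "m - 1 = length [a..<b] + (length [Suc b..<m] + (length [1..<a] + 1))" using a1 ab bm by simp_all
  show "Wl m a b ! (m - 2) = m" unfolding Wsplit
    by (subst e(1), subst nth_append_length_plus, subst nth_append_length_plus, subst nth_append_length_plus) simp
  show "Wl m a b ! (m - 1) = b" unfolding Wsplit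
    by (subst e(2), subst nth_append_length_plus, subst nth_append_length_plus, subst nth_append_length_plus) simp
qed

lemma W4: "Wl m a b ! (m - 2) = m" by (rule W45(1))
lemma W5: "Wl m a b ! (m - 1) = b" by (rule W45(2))

lemma firstW: "Wl m a b ! 0 = a" using W1[of 0] ab by simp
lemma lastW: "Wl m a b ! (m - 1) = b" by (rule W5)

end

lemma overlap_witness:
  assumes d: "distinct w" and l: "length w = m" and i: "1 \<le> i" "i \<le> m - 2"
    and j: "j < m - i" and k: "k < m - i" and diff: "(w ! (i + j) < w ! (i + k)) \<noteq> (w ! j < w ! k)"
  shows "st (drop i w) \<noteq> st (take (m - i) w)"
proof
  assume e: "st (drop i w) = st (take (m - i) w)"
  have "(drop i w ! j < drop i w ! k) = (take (m - i) w ! j < take (m - i) w ! k)"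
    by (rule st_eq_less[OF _ _ e]) (use d j k l in auto)
  then show False using diff j k l by simp
qed

lemma st_single: "st [x] = [1]"
proof -
  have "{y \<in> set [x]. y \<le> x} = {x}" by auto
  then show ?thesis by (simp add: st_def)
qed

context wit
begin

lemma descents: "j + 1 \<le> m - 2 \<Longrightarrow> \<not> (2 \<le> a \<and> j + 1 = m - a - 1) \<Longrightarrow> Wl m a b ! j < Wl m a b ! (j + 1)"
proof -
  assume j: "j + 1 \<le> m - 2" and nj: "\<not> (2 \<le> a \<and> j + 1 = m - a - 1)"
  consider "j + 1 < b - a" | "j + 1 = b - a" "j + 1 < m - a - 1" | "b - a < j + 1" "j + 1 < m - a - 1"
    | "j + 1 = m - a - 1" "a = 1" | "m - a - 1 < j + 1" "j + 1 < m - 2" | "m - a - 1 < j + 1" "j + 1 = m - 2"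
    using nj j a1 ab bm by linarith
  then show ?thesis
  proof cases
    case 1 then show ?thesis using W1[of j] W1[of "j + 1"] by simp
  next
    case 2 then show ?thesis using W1[of j] W2[of "j + 1"] by simp
  next
    case 3 then show ?thesis using W2[of j] W2[of "j + 1"] by simp
  next
    case 4
    then have e: "j + 1 = m - 2" by simp
    have "Wl m a b ! j < m"
    proof (cases "j < b - a")
      case True then show ?thesis using W1[of j] bm 4 by simp
    next
      case False then show ?thesis using W2[of j] 4 by simp
    qed
    then show ?thesis using W4 e by simp
  next
    case 5 then show ?thesis using W3[of j] W3[of "j + 1"] by simp
  next
    case 6
    then have "j + a + 2 - m < m" using bm ab by linarith
    then show ?thesis using W3[of j] W4 6 by simp
  qed
qed

lemma nonovW: "non_overlapping (Wl m a b)"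
proof -
  let ?W = "Wl m a b"
  have m3: "3 \<le> m" using a1 ab bm by simp
  have no: "st (drop i ?W) \<noteq> st (take (m - i) ?W)" if i: "1 \<le> i" "i \<le> m - 2" for i
  proof (cases "i = a \<and> 2 \<le> a")
    case False
    let ?L = "m - i"
    have e1: "i + (?L - 2) = m - 2" "i + (?L - 1) = m - 1" "?L - 2 + 1 = ?L - 1" using i m3 by linarith+
    have "?W ! (i + (?L - 2)) = m" "?W ! (i + (?L - 1)) = b" unfolding e1 using W4 W5 by auto
    moreover have "?W ! (?L - 2) < ?W ! (?L - 2 + 1)"
    proof (rule descents)
      show "?L - 2 + 1 \<le> m - 2" using i m3 by linarith
      show "\<not> (2 \<le> a \<and> ?L - 2 + 1 = m - a - 1)" using False i m3 by linarith
    qed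
    ultimately have d: "(?W ! (i + (?L - 2)) < ?W ! (i + (?L - 1))) \<noteq> (?W ! (?L - 2) < ?W ! (?L - 1))"
      using bm e1 by simp
    show ?thesis
      by (rule overlap_witness[OF distW lenW i _ _ d]) (use i m3 in linarith)+
  next
    case True
    then have ia: "i = a" "2 \<le> a" by auto
    show ?thesis
    proof (cases "2 * a + 2 \<le> m")
      case True
      let ?j = "m - 2 * a - 2"
      have e1: "i + ?j = m - a - 2" "i + (?j + 1) = m - a - 1" using ia True by linarith+
      have "?W ! (m - a - 1) = 1" using W3[of "m - a - 1"] ia True by simp
      moreover have "?W ! (m - a - 2) > 1"
      proof (cases "m - a - 2 < b - a")
        case True then show ?thesis using W1[of "m - a - 2"] ia by simp
      next
        case False
        then have "m - a - 2 < m - a - 1" using ia True by linarith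
        then show ?thesis using W2[of "m - a - 2"] False ia by simp
      qed
      moreover have "?W ! ?j < ?W ! (?j + 1)"
        by (rule descents) (use ia True in linarith)+
      ultimately have d: "(?W ! (i + ?j) < ?W ! (i + (?j + 1))) \<noteq> (?W ! ?j < ?W ! (?j + 1))"
        unfolding e1 by simp
      show ?thesis
        by (rule overlap_witness[OF distW lenW i _ _ d]) (use ia True in linarith)+
    next
      case False
      let ?k = "m - a - 1"
      have ea: "i + ?k = m - 1" "i + 0 = a" using ia m3 ab bm by linarith+
      have "?W ! 0 = a" using firstW .
      moreover have "?W ! ?k = 1"
      proof -
        have "?k < m - 2" "?k + a + 2 - m = 1" using ia ab bm by linarith+
        then show ?thesis using W3[of ?k] by simp
      qed
      moreover have "?W ! (i + ?k) = b" unfolding ea using W5 .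
      moreover have "?W ! (i + 0) < b"
      proof -
        have "m = 2 * a \<or> m = 2 * a + 1" using False sf ab by linarith
        then show ?thesis
        proof
          assume m2: "m = 2 * a"
          then have "a \<noteq> 2" using ex ab bm by auto
          then have "a - 1 \<le> a" "a < m - 2" "m - a - 1 \<le> a" using m2 ia by linarith+
          then have "?W ! a = 2" using W3[of a] m2 by simp
          then show ?thesis using ea ab ia by simp
        next
          assume m2: "m = 2 * a + 1"
          then have "?W ! a = 1" using W3[of a] ia by simp
          then show ?thesis using ea ab ia by simp
        qed
      qed
      ultimately have d: "(?W ! (i + 0) < ?W ! (i + ?k)) \<noteq> (?W ! 0 < ?W ! ?k)"
        using ia by simp
      show ?thesis
        by (rule overlap_witness[OF distW lenW i _ _ d]) (use ia m3 ab bm in linarith)+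
    qed
  qed
  have "overlap_set ?W = {m - 1}"
  proof
    show "overlap_set ?W \<subseteq> {m - 1}"
    proof
      fix i assume "i \<in> overlap_set ?W"
      then have i: "1 \<le> i" "i \<le> m - 1" "st (drop i ?W) = st (take (m - i) ?W)"
        by (auto simp: overlap_set_def lenW)
      then show "i \<in> {m - 1}" using no[of i] by (cases "i \<le> m - 2") auto
    qed
    have "drop (m - 1) ?W = ?W ! (m - 1) # drop (Suc (m - 1)) ?W"
      by (rule Cons_nth_drop_Suc[symmetric]) (use lenW m3 in simp)
    then have "drop (m - 1) ?W = [b]" using lenW lastW m3 by simp
    moreover have "take 1 ?W = [a]" using lenW firstW m3 by (cases ?W) auto
    ultimately show "{m - 1} \<subseteq> overlap_set ?W" using m3 lenW
      by (simp add: overlap_set_def st_single)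
  qed
  then show ?thesis by (simp add: non_overlapping_def lenW)
qed

end

lemma binom_one: "(n::nat) choose k = 1 \<Longrightarrow> k \<le> n \<Longrightarrow> k = 0 \<or> k = n"
proof (rule ccontr)
  assume a: "n choose k = 1" "k \<le> n" "\<not> (k = 0 \<or> k = n)"
  then have "0 < k" "k < n" by auto
  then obtain n' k' where nk: "n = Suc n'" "k = Suc k'" "k' < n'"
    by (metis Suc_less_SucD gr0_conv_Suc less_imp_Suc_add)
  have "(n' choose k') + (n' choose Suc k') = 1" using a nk by simp
  moreover have "0 < n' choose k'" "0 < n' choose Suc k'" using nk by simp_all
  ultimately show False by linarith
qed

definition Fc :: "nat \<Rightarrow> nat \<Rightarrow> nat \<Rightarrow> nat" where
  "Fc m a b = (a + b - 1 - 1 choose (b - 1)) * ((2 * m - 1 - (a + b - 1)) choose (m - b))"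

lemma ch2_Fc: "p \<in> Sym m \<Longrightarrow> 2 \<le> m \<Longrightarrow> ch p 2 = Fc m (p ! 0) (p ! (m - 1))"
proof -
  assume "p \<in> Sym m" "2 \<le> m"
  then interpret ch2 p m by unfold_locales
  show ?thesis unfolding Fc_def by (rule ch2_formula)
qed

lemma Fc_one: "Fc m m' m = 1" if "2 \<le> m" "m' = 1" for m m'
  using that by (simp add: Fc_def)

lemma Fc_one_iff:
  assumes "1 \<le> c" "c < d" "d \<le> m" "Fc m c d = 1"
  shows "c = 1 \<and> d = m"
proof -
  have f1: "c + d - 1 - 1 choose (d - 1) = 1" and f2: "(2 * m - 1 - (c + d - 1)) choose (m - d) = 1"
    using assms(4) by (auto simp: Fc_def)
  have "d - 1 = 0 \<or> d - 1 = c + d - 1 - 1" by (rule binom_one[OF f1]) (use assms in linarith)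
  then have c: "c = 1" using assms by linarith
  have "m - d = 0 \<or> m - d = 2 * m - 1 - (c + d - 1)" by (rule binom_one[OF f2]) (use assms in linarith)
  then have "d = m" using assms by linarith
  then show ?thesis using c by simp
qed

lemma Fc_four:
  assumes "1 \<le> a" "a < b" "a + b \<le> 5" "1 \<le> c" "c < d" "c + d \<le> 5" "Fc 4 a b = Fc 4 c d"
  shows "a = c \<and> b = d"
proof -
  have ea: "a = 1 \<and> (b = 2 \<or> b = 3 \<or> b = 4) \<or> a = 2 \<and> b = 3" using assms by linarith
  have ec: "c = 1 \<and> (d = 2 \<or> d = 3 \<or> d = 4) \<or> c = 2 \<and> d = 3" using assms by linarith
  show ?thesis using ea ec assms(7) by (auto simp: Fc_def eval_nat_numeral)
qed

lemma sym_vals: "p \<in> Sym m \<Longrightarrow> i < m \<Longrightarrow> 1 \<le> p ! i \<and> p ! i \<le> m"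
proof -
  assume p: "p \<in> Sym m" and i: "i < m"
  then have "p ! i \<in> set p" using Sym_length[OF p] by simp
  then show ?thesis using p by (auto simp: Sym_iff)
qed

theorem theorem1p8:
  assumes A: "\<forall>m\<ge>1. \<forall>\<pi>\<in>Sym m. \<forall>\<tau>\<in>Sym m.
      non_overlapping \<pi> \<and> non_overlapping \<tau> \<and> standard_form \<pi> \<and> standard_form \<tau> \<and>
      c_wilf_equiv \<pi> \<tau> \<longrightarrow> \<pi> ! 0 = \<tau> ! 0 \<and> \<pi> ! (m - 1) = \<tau> ! (m - 1)"
  shows "\<forall>m\<ge>1. \<forall>\<pi>\<in>Sym m. \<forall>\<tau>\<in>Sym m.
      standard_form \<pi> \<and> standard_form \<tau> \<and>
      strongly_c_wilf_equiv \<pi> \<tau> \<longrightarrow> \<pi> ! 0 = \<tau> ! 0 \<and> \<pi> ! (m - 1) = \<tau> ! (m - 1)"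
proof (intro allI impI ballI)
  fix m \<pi> \<tau>
  assume m1: "1 \<le> m" and \<pi>: "\<pi> \<in> Sym m" and \<tau>: "\<tau> \<in> Sym m"
    and H: "standard_form \<pi> \<and> standard_form \<tau> \<and> strongly_c_wilf_equiv \<pi> \<tau>"
  have lp: "length \<pi> = m" and lt: "length \<tau> = m" using \<pi> \<tau> Sym_length by auto
  define a where "a = \<pi> ! 0"
  define b where "b = \<pi> ! (m - 1)"
  define c where "c = \<tau> ! 0"
  define d where "d = \<tau> ! (m - 1)"
  have sf: "a < b" "a + b \<le> m + 1" "c < d" "c + d \<le> m + 1"
    using H lp lt unfolding standard_form_def a_def b_def c_def d_def by auto
  have m2: "2 \<le> m"
  proof (rule ccontr)
    assume "\<not> 2 \<le> m"
    then have "m = 1" using m1 by simp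
    then show False using sf(1) unfolding a_def b_def by simp
  qed
  have vals: "1 \<le> a" "b \<le> m" "1 \<le> c" "d \<le> m"
    using sym_vals[OF \<pi>, of 0] sym_vals[OF \<pi>, of "m - 1"] sym_vals[OF \<tau>, of 0] sym_vals[OF \<tau>, of "m - 1"] m2
    unfolding a_def b_def c_def d_def by auto
  have ne: "\<pi> \<noteq> []" "\<tau> \<noteq> []" using lp lt m2 by auto
  have Teq: "T \<pi> n j = T \<tau> n j" for n j using strong_T[OF ne] H by blast
  have rreq: "rr \<pi> l k = rr \<tau> l k" if "1 \<le> l" for l k
    using T_eq_rr_eq[OF ne Teq that] .
  have cheq: "ch \<pi> k = ch \<tau> k" for k
    using rr_chain[of \<pi> k] rr_chain[of \<tau> k] rreq[of "k * (m - 1) + 1" k] lp lt m2 by simp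
  have Feq: "Fc m a b = Fc m c d"
    using ch2_Fc[OF \<pi> m2] ch2_Fc[OF \<tau> m2] cheq[of 2] unfolding a_def b_def c_def d_def by simp
  show "\<pi> ! 0 = \<tau> ! 0 \<and> \<pi> ! (m - 1) = \<tau> ! (m - 1)"
  proof (cases "(a = 1 \<and> b = m) \<or> (c = 1 \<and> d = m)")
    case True
    then show ?thesis
    proof
      assume ab: "a = 1 \<and> b = m"
      then have "Fc m c d = 1" using Feq Fc_one[OF m2] by simp
      then have "c = 1 \<and> d = m" using Fc_one_iff sf vals by blast
      then show ?thesis using ab unfolding a_def b_def c_def d_def by simp
    next
      assume cd: "c = 1 \<and> d = m"
      then have "Fc m a b = 1" using Feq Fc_one[OF m2] by simp
      then have "a = 1 \<and> b = m" using Fc_one_iff sf vals by blast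
      then show ?thesis using cd unfolding a_def b_def c_def d_def by simp
    qed
  next
    case nf: False
    show ?thesis
    proof (cases "m = 4 \<and> ((a = 2 \<and> b = 3) \<or> (c = 2 \<and> d = 3))")
      case True
      then have "m = 4" by simp
      then have "a = c \<and> b = d" using Fc_four[of a b c d] sf vals Feq by simp
      then show ?thesis unfolding a_def b_def c_def d_def by simp
    next
      case False
      have bm: "b < m" "d < m" using nf sf vals by linarith+
      interpret wp: wit m a b using vals sf bm False by unfold_locales auto
      interpret wt: wit m c d using vals sf bm False by unfold_locales auto
      let ?p = "Wl m a b" and ?q = "Wl m c d"
      have lW: "length ?p = m" "length ?q = m" using wp.lenW wt.lenW .
      have neW: "?p \<noteq> []" "?q \<noteq> []" using lW m2 by auto
      have chp: "ch ?p k = ch \<pi> k" for k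
        by (rule ch_eq[OF wp.SymW \<pi> m2]) (use wp.firstW wp.lastW in \<open>simp_all add: a_def b_def\<close>)
      have chq: "ch ?q k = ch \<tau> k" for k
        by (rule ch_eq[OF wt.SymW \<tau> m2]) (use wt.firstW wt.lastW in \<open>simp_all add: c_def d_def\<close>)
      have rrW: "rr ?p l k = rr ?q l k" if "1 \<le> l" for l k
        by (rule rr_nonov_eq) (use lW m2 wp.nonovW wt.nonovW chp chq cheq that in auto)
      have TW: "T ?p n j = T ?q n j" for n j by (rule rr_eq_T_eq[OF neW rrW])
      have cw: "c_wilf_equiv ?p ?q" by (rule T_cwilf[OF neW TW])
      have sfp: "standard_form ?p" "standard_form ?q"
        unfolding standard_form_def using lW wp.firstW wp.lastW wt.firstW wt.lastW sf by simp_all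
      have "?p ! 0 = ?q ! 0 \<and> ?p ! (m - 1) = ?q ! (m - 1)"
        using A m1 wp.SymW wt.SymW wp.nonovW wt.nonovW sfp cw by blast
      then have "a = c \<and> b = d" unfolding wp.firstW wp.lastW wt.firstW wt.lastW .
      then show ?thesis unfolding a_def b_def c_def d_def by simp
    qed
  qed
qed

end
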